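(* Let $K$, $L$, $A$ be as in the context, and suppose there is an $A$-scaffold on $L$ of tolerance $\mathfrak{T}\ge1$ with shift parameters $b_1,\dots,b_n$ (and elements $\lambda_t$, $\Psi_i$). Then $\{\Psi^{(s)}:s\in\mathbb{S}_{p^n}\}$ is a $K$-basis of $A$. Moreover, let $b'$ be any integer with $\mathfrak{a}(b')=p^n-1$ and let $\rho\in L$ with $v_L(\rho)=b'$. Then $L$ is a free $A$-module on the generator $\rho$. Additionally, for each $h\in\mathbb{Z}$, the ring $\mathfrak{A}(h,A)=\{\alpha\in A:\alpha\cdot\mathfrak{P}_L^h\subseteq\mathfrak{P}_L^h\}$ is an $\mathfrak{O}_K$-order in $A$.
   Context: Let $K$ be a field complete with respect to a discrete valuation, with residue field $\kappa$ of characteristic $p>0$ ($\kappa$ need not be perfect; $K$ may have characteristic $0$ or $p$). Let $L/K$ be a totally ramified field extension of degree $p^n$; let $v_K,v_L$ be the normalized valuations ($v_K(K^\times)=v_L(L^\times)=\mathbb{Z}$), $\mathfrak{O}_K,\mathfrak{O}_L$ the valuation rings, $\mathfrak{P}_K,\mathfrak{P}_L$ their maximal ideals. Let $A$ be a $K$-algebra with $\dim_K A=p^n$ acting $K$-linearly on $L$ (making $L$ a left $A$-module), written $\alpha\cdot x$. Let $\mathbb{S}_{p^n}=\{0,\dots,p^n-1\}$; write $s\in\mathbb{S}_{p^n}$ in base $p$ as $s=\sum_{i=1}^n s_{(n-i)}p^{n-i}$ with $s_{(n-i)}\in\{0,\dots,p-1\}$. Given integers $b_1,\dots,b_n$ prime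 to $p$ (shift parameters), put $\mathfrak{b}(s)=\sum_{i=1}^n s_{(n-i)}p^{n-i}b_i$; the map $s\mapsto\mathfrak{b}(s)\bmod p^n$ is a bijection of $\mathbb{S}_{p^n}$, and for $t\in\mathbb{Z}$ let $\mathfrak{a}(t)\in\mathbb{S}_{p^n}$ be the unique element with $\mathfrak{b}(\mathfrak{a}(t))\equiv -t\pmod{p^n}$, with base-$p$ digits $\mathfrak{a}(t)_{(n-i)}$. An $A$-scaffold on $L$ of tolerance $\mathfrak{T}\ge1$ (possibly $\mathfrak{T}=\infty$) with shift parameters $b_1,\dots,b_n$ consists of: (i) elements $\lambda_t\in L$ for $t\in\mathbb{Z}$ with $v_L(\lambda_t)=t$ and $\lambda_{t_1}\lambda_{t_2}^{-1}\in K$ whenever $t_1\equiv t_2\pmod{p^n}$; (ii) elements $\Psi_1,\dots,\Psi_n\in A$ with $\Psi_i\cdot1=0$, such that for each $i$ and each $t\in\mathbb{Z}$ there is a unit $u_{i,t}\in\mathfrak{O}_K^\times$ with $\Psi_i\cdot\lambda_t\equiv u_{i,t}\lambda_{t+p^{n-i}b_i}$ if $\mathfrak{a}(t)_{(n-i)}\ge1$ and $\Psi_i\cdot\lambda_t\equiv0$ if $\mathfrak{a}(t)_{(n-i)}=0$, congruences modulo $\lambda_{t+p^{n-i}b_i}\mathfrak{P}_L^{\mathfrak{T}}$ (equalities if $\mathfrak{T}=\infty$). For $s\in\mathbb{S}_{p^n}$, $\Psi^{(s)}=\Psi_n^{s_{(0)}}\Psi_{n-1}^{s_{(1)}}\cdots\Psi_1^{s_{(n-1)}}$.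 *)

theory Defs
  imports Main "HOL-Library.Extended_Nat" "HOL-Computational_Algebra.Primes"
begin

text \<open>The field L is modelled as a type 'l of class field; K is a subfield given as a subset.
  v is the normalized discrete valuation v_L on L (only meaningful on nonzero elements).\<close>

definition subfield_of :: "'l::field set \<Rightarrow> bool" where
  "subfield_of K \<longleftrightarrow> 0 \<in> K \<and> 1 \<in> K \<and> (\<forall>x\<in>K. \<forall>y\<in>K. x + y \<in> K \<and> x * y \<in> K)
     \<and> (\<forall>x\<in>K. - x \<in> K) \<and> (\<forall>x\<in>K. x \<noteq> 0 \<longrightarrow> inverse x \<in> K)"

definition normalized_discrete_valuation :: "('l::field \<Rightarrow> int) \<Rightarrow> bool" where
  "normalized_discrete_valuation v \<longleftrightarrow>
     (\<forall>x y. x \<noteq> 0 \<longrightarrow> y \<noteq> 0 \<longrightarrow> v (x * y) = v x + v y)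
   \<and> (\<forall>x y. x \<noteq> 0 \<longrightarrow> y \<noteq> 0 \<longrightarrow> x + y \<noteq> 0 \<longrightarrow> v (x + y) \<ge> min (v x) (v y))
   \<and> (\<forall>t. \<exists>x. x \<noteq> 0 \<and> v x = t)"

definition pow_ideal :: "('l::field \<Rightarrow> int) \<Rightarrow> int \<Rightarrow> 'l set" where
  "pow_ideal v h = {x. x = 0 \<or> v x \<ge> h}"

definition val_ring :: "'l::field set \<Rightarrow> ('l \<Rightarrow> int) \<Rightarrow> 'l set" where
  "val_ring K v = K \<inter> pow_ideal v 0"

definition val_units :: "'l::field set \<Rightarrow> ('l \<Rightarrow> int) \<Rightarrow> 'l set" where
  "val_units K v = {x \<in> K. x \<noteq> 0 \<and> v x = 0}"

definition complete_wrt :: "'l::field set \<Rightarrow> ('l \<Rightarrow> int) \<Rightarrow> bool" where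
  "complete_wrt K v \<longleftrightarrow> (\<forall>f::nat \<Rightarrow> 'l. (\<forall>m. f m \<in> K) \<longrightarrow>
      (\<forall>N. \<exists>M. \<forall>m\<ge>M. \<forall>k\<ge>M. f m - f k \<in> pow_ideal v N) \<longrightarrow>
      (\<exists>x\<in>K. \<forall>N. \<exists>M. \<forall>m\<ge>M. f m - x \<in> pow_ideal v N))"

definition basis_over :: "'l::zero set \<Rightarrow> ('l \<Rightarrow> 'b::comm_monoid_add \<Rightarrow> 'b) \<Rightarrow> ('i \<Rightarrow> 'b) \<Rightarrow> 'i set \<Rightarrow> bool" where
  "basis_over K smul e I \<longleftrightarrow> finite I \<and>
     (\<forall>x. \<exists>!c::'i \<Rightarrow> 'l. (\<forall>i\<in>I. c i \<in> K) \<and> (\<forall>i. i \<notin> I \<longrightarrow> c i = 0)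
                         \<and> x = (\<Sum>i\<in>I. smul (c i) (e i)))"

definition K_algebra :: "'l::field set \<Rightarrow> ('l \<Rightarrow> 'a::ring_1) \<Rightarrow> bool" where
  "K_algebra K \<iota> \<longleftrightarrow> \<iota> 1 = 1 \<and> (\<forall>x\<in>K. \<forall>y\<in>K. \<iota> (x + y) = \<iota> x + \<iota> y \<and> \<iota> (x * y) = \<iota> x * \<iota> y)
     \<and> (\<forall>x\<in>K. \<forall>a. \<iota> x * a = a * \<iota> x)"

definition alg_action :: "'l::field set \<Rightarrow> ('l \<Rightarrow> 'a::ring_1) \<Rightarrow> ('a \<Rightarrow> 'l \<Rightarrow> 'l) \<Rightarrow> bool" where
  "alg_action K \<iota> act \<longleftrightarrow>
     (\<forall>a b x. act (a * b) x = act a (act b x)) \<and> (\<forall>x. act 1 x = x)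
   \<and> (\<forall>a b x. act (a + b) x = act a x + act b x) \<and> (\<forall>a x y. act a (x + y) = act a x + act a y)
   \<and> (\<forall>k\<in>K. \<forall>x. act (\<iota> k) x = k * x) \<and> (\<forall>k\<in>K. \<forall>a x. act a (k * x) = k * act a x)"

definition digit :: "nat \<Rightarrow> nat \<Rightarrow> nat \<Rightarrow> nat" where
  "digit p s j = (s div p ^ j) mod p"

definition shift_b :: "nat \<Rightarrow> nat \<Rightarrow> (nat \<Rightarrow> int) \<Rightarrow> nat \<Rightarrow> int" where
  "shift_b p n b s = (\<Sum>i=1..n. int (digit p s (n - i)) * int p ^ (n - i) * b i)"

definition a_fun :: "nat \<Rightarrow> nat \<Rightarrow> (nat \<Rightarrow> int) \<Rightarrow> int \<Rightarrow> nat" where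
  "a_fun p n b t = (THE s. s < p ^ n \<and> shift_b p n b s mod (int p ^ n) = (- t) mod (int p ^ n))"

definition Psi_pow :: "nat \<Rightarrow> nat \<Rightarrow> (nat \<Rightarrow> 'a::monoid_mult) \<Rightarrow> nat \<Rightarrow> 'a" where
  "Psi_pow p n Psi s = prod_list (map (\<lambda>j. Psi (n - j) ^ digit p s j) [0..<n])"

text \<open>x = y modulo lambda_t P_L^T (where v(lambda_t) = t); equality if T = infinity\<close>
definition cong_tol :: "('l::field \<Rightarrow> int) \<Rightarrow> enat \<Rightarrow> int \<Rightarrow> 'l \<Rightarrow> 'l \<Rightarrow> bool" where
  "cong_tol v T t x y \<longleftrightarrow> x = y \<or> (\<exists>T'::nat. T = enat T' \<and> v (x - y) \<ge> t + int T')"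

definition is_scaffold ::
  "'l::field set \<Rightarrow> ('l \<Rightarrow> int) \<Rightarrow> ('a::ring_1 \<Rightarrow> 'l \<Rightarrow> 'l) \<Rightarrow> nat \<Rightarrow> nat \<Rightarrow> (nat \<Rightarrow> int)
    \<Rightarrow> enat \<Rightarrow> (int \<Rightarrow> 'l) \<Rightarrow> (nat \<Rightarrow> 'a) \<Rightarrow> bool" where
  "is_scaffold K v act p n b T lam Psi \<longleftrightarrow>
     T \<ge> 1
   \<and> (\<forall>i\<in>{1..n}. \<not> int p dvd b i)
   \<and> (\<forall>t. lam t \<noteq> 0 \<and> v (lam t) = t)
   \<and> (\<forall>t1 t2. t1 mod (int p ^ n) = t2 mod (int p ^ n) \<longrightarrow> lam t1 * inverse (lam t2) \<in> K)
   \<and> (\<forall>i\<in>{1..n}. act (Psi i) 1 = 0)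
   \<and> (\<forall>i\<in>{1..n}. \<forall>t. \<exists>u\<in>val_units K v.
        (let t' = t + int p ^ (n - i) * b i in
          (if digit p (a_fun p n b t) (n - i) \<ge> 1
           then cong_tol v T t' (act (Psi i) (lam t)) (u * lam t')
           else cong_tol v T t' (act (Psi i) (lam t)) 0)))"

definition assoc_order :: "('a \<Rightarrow> 'l \<Rightarrow> 'l) \<Rightarrow> ('l::field \<Rightarrow> int) \<Rightarrow> int \<Rightarrow> 'a set" where
  "assoc_order act v h = {\<alpha>. \<forall>x\<in>pow_ideal v h. act \<alpha> x \<in> pow_ideal v h}"

definition is_OK_order :: "'l::field set \<Rightarrow> ('l \<Rightarrow> int) \<Rightarrow> ('l \<Rightarrow> 'a::ring_1) \<Rightarrow> 'a set \<Rightarrow> bool" where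
  "is_OK_order K v \<iota> R \<longleftrightarrow>
     0 \<in> R \<and> 1 \<in> R \<and> (\<forall>a\<in>R. \<forall>b\<in>R. a + b \<in> R \<and> a * b \<in> R) \<and> (\<forall>a\<in>R. - a \<in> R)
   \<and> (\<forall>c\<in>val_ring K v. \<forall>a\<in>R. \<iota> c * a \<in> R)
   \<and> (\<exists>F. finite F \<and> F \<subseteq> R \<and>
        R = {\<Sum>f\<in>F. \<iota> (c f) * f | c. \<forall>f\<in>F. c f \<in> val_ring K v})
   \<and> (\<exists>(e::nat \<Rightarrow> 'a) I. basis_over K (\<lambda>k a. \<iota> k * a) e I \<and> e ` I \<subseteq> R)"

end

theory Submission
  imports Defs
begin

section \<open>Valuation basics\<close>

context
  fixes v :: "'l::field \<Rightarrow> int"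
  assumes val: "normalized_discrete_valuation v"
begin

lemma v_mult: "x \<noteq> 0 \<Longrightarrow> y \<noteq> 0 \<Longrightarrow> v (x * y) = v x + v y"
  using val unfolding normalized_discrete_valuation_def by blast

lemma v_add: "x \<noteq> 0 \<Longrightarrow> y \<noteq> 0 \<Longrightarrow> x + y \<noteq> 0 \<Longrightarrow> v (x + y) \<ge> min (v x) (v y)"
  using val unfolding normalized_discrete_valuation_def by blast

lemma v_one: "v 1 = 0"
  using v_mult[of 1 1] by simp

lemma v_minus_one: "v (-1) = 0"
  using v_mult[of "-1" "-1"] v_one by simp

lemma v_uminus: "v (- x) = v x"
proof (cases "x = 0")
  case True then show ?thesis by simp
next
  case False
  have "v ((-1) * x) = v (-1) + v x" using False v_mult[of "-1" x] by simp
  then show ?thesis using v_minus_one by simp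
qed

lemma v_inverse: "x \<noteq> 0 \<Longrightarrow> v (inverse x) = - v x"
  using v_mult[of x "inverse x"] v_one by simp

lemma pow_ideal_iff: "x \<in> pow_ideal v m \<longleftrightarrow> x = 0 \<or> v x \<ge> m"
  by (simp add: pow_ideal_def)

lemma pow_ideal_0[simp]: "0 \<in> pow_ideal v m"
  by (simp add: pow_ideal_def)

lemma pow_ideal_mono: "x \<in> pow_ideal v m \<Longrightarrow> m' \<le> m \<Longrightarrow> x \<in> pow_ideal v m'"
  by (auto simp: pow_ideal_def)

lemma pow_ideal_add: "x \<in> pow_ideal v m \<Longrightarrow> y \<in> pow_ideal v m \<Longrightarrow> x + y \<in> pow_ideal v m"
  using v_add[of x y] by (fastforce simp: pow_ideal_def)

lemma pow_ideal_uminus: "x \<in> pow_ideal v m \<Longrightarrow> - x \<in> pow_ideal v m"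
  using v_uminus[of x] by (auto simp: pow_ideal_def)

lemma pow_ideal_diff: "x \<in> pow_ideal v m \<Longrightarrow> y \<in> pow_ideal v m \<Longrightarrow> x - y \<in> pow_ideal v m"
  using pow_ideal_add[of x m "-y"] pow_ideal_uminus[of y m] by simp

lemma pow_ideal_mult: "x \<in> pow_ideal v m \<Longrightarrow> y \<in> pow_ideal v k \<Longrightarrow> x * y \<in> pow_ideal v (m + k)"
proof (cases "x = 0 \<or> y = 0")
  case False
  assume "x \<in> pow_ideal v m" "y \<in> pow_ideal v k"
  then show ?thesis using v_mult[of x y] False by (auto simp: pow_ideal_def)
qed (auto simp: pow_ideal_def)

lemma pow_ideal_sum: "(\<And>i. i \<in> I \<Longrightarrow> f i \<in> pow_ideal v m) \<Longrightarrow> (\<Sum>i\<in>I. f i) \<in> pow_ideal v m"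
proof (induction I rule: infinite_finite_induct)
  case (insert x F) then show ?case by (simp add: pow_ideal_add)
qed auto

lemma v_add_lt: "x \<noteq> 0 \<Longrightarrow> y \<in> pow_ideal v (v x + 1) \<Longrightarrow> x + y \<noteq> 0 \<and> v (x + y) = v x"
proof -
  assume x: "x \<noteq> 0" and y: "y \<in> pow_ideal v (v x + 1)"
  show ?thesis
  proof (cases "y = 0")
    case True then show ?thesis using x by simp
  next
    case False
    then have vy: "v y > v x" using y by (simp add: pow_ideal_def)
    have ne: "x + y \<noteq> 0"
    proof
      assume "x + y = 0"
      then have "y = - x" by (simp add: add_eq_0_iff)
      then show False using vy v_uminus[of x] by simp
    qed
    have "v (x + y) \<ge> v x" using v_add[OF x False ne] vy by simp
    moreover have "v x \<ge> min (v (x + y)) (v (- y))"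
      using v_add[of "x + y" "- y"] ne False x by simp
    ultimately show ?thesis using ne vy v_uminus[of y] by auto
  qed
qed

lemma distinct_val_sum:
  assumes "finite S" "S \<noteq> {}" "\<And>i. i \<in> S \<Longrightarrow> f i \<noteq> 0" "inj_on (\<lambda>i. v (f i)) S"
  shows "(\<Sum>i\<in>S. f i) \<noteq> 0 \<and> v (\<Sum>i\<in>S. f i) = Min ((\<lambda>i. v (f i)) ` S)"
  using assms
proof (induction S rule: finite_ne_induct)
  case (singleton x) then show ?case by simp
next
  case (insert x F)
  have IH: "(\<Sum>i\<in>F. f i) \<noteq> 0 \<and> v (\<Sum>i\<in>F. f i) = Min ((\<lambda>i. v (f i)) ` F)"
    using insert by (auto simp: inj_on_insert)
  have ne: "v (f x) \<noteq> Min ((\<lambda>i. v (f i)) ` F)"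
  proof
    assume "v (f x) = Min ((\<lambda>i. v (f i)) ` F)"
    moreover have "Min ((\<lambda>i. v (f i)) ` F) \<in> (\<lambda>i. v (f i)) ` F"
      using insert by (intro Min_in) auto
    ultimately show False using insert by (auto simp: inj_on_insert)
  qed
  let ?s = "\<Sum>i\<in>F. f i"
  have fx: "f x \<noteq> 0" using insert by auto
  have sum_eq: "(\<Sum>i\<in>insert x F. f i) = f x + ?s" using insert by simp
  have minins: "Min ((\<lambda>i. v (f i)) ` insert x F) = min (v (f x)) (Min ((\<lambda>i. v (f i)) ` F))"
    using insert by (simp add: Min_insert)
  show ?case
  proof (cases "v (f x) < v ?s")
    case True
    then have "?s \<in> pow_ideal v (v (f x) + 1)" by (simp add: pow_ideal_def)
    from v_add_lt[OF fx this] show ?thesis using sum_eq minins True IH by simp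
  next
    case False
    then have "v ?s < v (f x)" using ne IH by simp
    then have "f x \<in> pow_ideal v (v ?s + 1)" by (simp add: pow_ideal_def)
    from v_add_lt[OF _ this] IH have "?s + f x \<noteq> 0 \<and> v (?s + f x) = v ?s" by blast
    then show ?thesis using sum_eq minins False IH by (simp add: add.commute)
  qed
qed

lemma distinct_val_sum':
  assumes fin: "finite I"
    and dist: "\<And>i j. i \<in> I \<Longrightarrow> j \<in> I \<Longrightarrow> f i \<noteq> 0 \<Longrightarrow> f j \<noteq> 0 \<Longrightarrow> v (f i) = v (f j) \<Longrightarrow> i = j"
    and s: "(\<Sum>i\<in>I. f i) \<in> pow_ideal v m"
    and i: "i \<in> I"
  shows "f i \<in> pow_ideal v m"
proof (cases "f i = 0")
  case True then show ?thesis by simp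
next
  case False
  let ?S = "{i\<in>I. f i \<noteq> 0}"
  have eq: "(\<Sum>i\<in>I. f i) = (\<Sum>i\<in>?S. f i)"
    using fin by (intro sum.mono_neutral_right) auto
  have "inj_on (\<lambda>i. v (f i)) ?S" using dist by (auto simp: inj_on_def)
  then have r: "(\<Sum>i\<in>?S. f i) \<noteq> 0 \<and> v (\<Sum>i\<in>?S. f i) = Min ((\<lambda>i. v (f i)) ` ?S)"
    using fin False i by (intro distinct_val_sum) auto
  have "Min ((\<lambda>i. v (f i)) ` ?S) \<le> v (f i)" using fin False i by (intro Min_le) auto
  then show ?thesis using s r eq by (auto simp: pow_ideal_def)
qed

lemma distinct_val_sum_zero:
  assumes "finite I"
    and "\<And>i j. i \<in> I \<Longrightarrow> j \<in> I \<Longrightarrow> f i \<noteq> 0 \<Longrightarrow> f j \<noteq> 0 \<Longrightarrow> v (f i) = v (f j) \<Longrightarrow> i = j"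
    and "(\<Sum>i\<in>I. f i) = 0" "i \<in> I"
  shows "f i = 0"
proof (rule ccontr)
  assume ne: "f i \<noteq> 0"
  have "f i \<in> pow_ideal v (v (f i) + 1)"
    using distinct_val_sum'[OF assms(1,2), where m="v (f i) + 1"] assms(3,4) by simp
  then show False using ne by (simp add: pow_ideal_def)
qed

end

section \<open>Linear algebra over a subfield\<close>

lemma subfield_props:
  assumes "subfield_of K"
  shows "0 \<in> K" "1 \<in> K" "x \<in> K \<Longrightarrow> y \<in> K \<Longrightarrow> x + y \<in> K" "x \<in> K \<Longrightarrow> y \<in> K \<Longrightarrow> x * y \<in> K"
    "x \<in> K \<Longrightarrow> - x \<in> K" "x \<in> K \<Longrightarrow> inverse x \<in> K"
  using assms unfolding subfield_of_def by (auto simp: inverse_eq_divide)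

lemma subfield_diff: "subfield_of K \<Longrightarrow> x \<in> K \<Longrightarrow> y \<in> K \<Longrightarrow> x - y \<in> K"
  using subfield_props[of K] by (metis diff_conv_add_uminus)

lemma subfield_divide: "subfield_of K \<Longrightarrow> x \<in> K \<Longrightarrow> y \<in> K \<Longrightarrow> x / y \<in> K"
  using subfield_props[of K] by (metis divide_inverse)

lemma subfield_sum: "subfield_of K \<Longrightarrow> (\<And>i. i \<in> I \<Longrightarrow> f i \<in> K) \<Longrightarrow> (\<Sum>i\<in>I. f i) \<in> K"
proof (induction I rule: infinite_finite_induct)
  case (infinite A) then show ?case using subfield_props by simp
next
  case empty then show ?case using subfield_props by simp
next
  case (insert x F) then show ?case by (simp, intro subfield_props(3)) auto
qed

lemma homog_system:
  fixes a :: "'i \<Rightarrow> 'j \<Rightarrow> 'l::field"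
  assumes K: "subfield_of K" and finE: "finite E"
  shows "finite F \<Longrightarrow> card E < card F \<Longrightarrow> (\<forall>i\<in>F. \<forall>j\<in>E. a i j \<in> K) \<Longrightarrow>
    \<exists>c. (\<forall>i\<in>F. c i \<in> K) \<and> (\<exists>i\<in>F. c i \<noteq> 0) \<and> (\<forall>j\<in>E. (\<Sum>i\<in>F. c i * a i j) = 0)"
  using finE
proof (induction E arbitrary: F a rule: finite_induct)
  case empty
  then obtain i0 where i0: "i0 \<in> F" by fastforce
  show ?case
    by (rule exI[of _ "\<lambda>i. if i = i0 then 1 else 0"]) (use i0 subfield_props[OF K] in auto)
next
  case (insert e E)
  show ?case
  proof (cases "\<forall>i\<in>F. a i e = 0")
    case True
    from insert.IH[of F a] insert.prems insert.hyps obtain c where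
      c: "\<forall>i\<in>F. c i \<in> K" "\<exists>i\<in>F. c i \<noteq> 0" "\<forall>j\<in>E. (\<Sum>i\<in>F. c i * a i j) = 0" by auto
    show ?thesis using c True by (intro exI[of _ c]) auto
  next
    case False
    then obtain i0 where i0: "i0 \<in> F" "a i0 e \<noteq> 0" by blast
    define F' where "F' = F - {i0}"
    define r where "r i = a i e / a i0 e" for i
    define a' where "a' i j = a i j - r i * a i0 j" for i j
    have finF': "finite F'" using insert.prems by (simp add: F'_def)
    have cardF': "card E < card F'"
      using insert.prems insert.hyps i0 by (simp add: F'_def card_Diff_singleton)
    have rK: "r i \<in> K" if "i \<in> F" for i
      using insert.prems that i0 by (auto simp: r_def intro!: subfield_divide[OF K])
    have a'K: "\<forall>i\<in>F'. \<forall>j\<in>E. a' i j \<in> K"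
      using insert.prems rK i0 by (auto simp: a'_def F'_def intro!: subfield_diff[OF K] subfield_props(4)[OF K])
    from insert.IH[OF finF' cardF' a'K] obtain c where
      c: "\<forall>i\<in>F'. c i \<in> K" "\<exists>i\<in>F'. c i \<noteq> 0" "\<forall>j\<in>E. (\<Sum>i\<in>F'. c i * a' i j) = 0" by blast
    define c0 where "c0 = - (\<Sum>k\<in>F'. c k * r k)"
    define c' where "c' i = (if i = i0 then c0 else c i)" for i
    have F_eq: "F = insert i0 F'" using i0 by (auto simp: F'_def)
    have i0F': "i0 \<notin> F'" by (simp add: F'_def)
    have key: "(\<Sum>i\<in>F. c' i * a i j) = (\<Sum>i\<in>F'. c i * a' i j)" for j
    proof -
      have "(\<Sum>i\<in>F'. c' i * a i j) = (\<Sum>i\<in>F'. c i * a i j)"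
        using i0F' by (intro sum.cong) (auto simp: c'_def)
      then have "(\<Sum>i\<in>F. c' i * a i j) = c0 * a i0 j + (\<Sum>i\<in>F'. c i * a i j)"
        using F_eq i0F' finF' by (simp add: c'_def)
      also have "(\<Sum>i\<in>F'. c i * a i j) = (\<Sum>i\<in>F'. c i * a' i j) + (\<Sum>i\<in>F'. c i * r i) * a i0 j"
      proof -
        have "(\<Sum>i\<in>F'. c i * r i) * a i0 j = (\<Sum>i\<in>F'. c i * (r i * a i0 j))"
          by (simp add: sum_distrib_right mult.assoc)
        moreover have "(\<Sum>i\<in>F'. c i * a i j) = (\<Sum>i\<in>F'. c i * a' i j + c i * (r i * a i0 j))"
          by (intro sum.cong refl) (simp add: a'_def algebra_simps)
        ultimately show ?thesis by (simp add: sum.distrib)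
      qed
      finally show ?thesis by (simp add: c0_def algebra_simps)
    qed
    have a'e: "a' i e = 0" for i using i0 by (simp add: a'_def r_def)
    show ?thesis
    proof (intro exI[of _ c'] conjI ballI)
      fix i assume iF: "i \<in> F"
      have "(\<Sum>k\<in>F'. c k * r k) \<in> K"
        using c(1) rK by (intro subfield_sum[OF K] subfield_props(4)[OF K]) (auto simp: F'_def)
      then have "c0 \<in> K" unfolding c0_def by (rule subfield_props(5)[OF K])
      then show "c' i \<in> K" using c(1) iF by (auto simp: c'_def F'_def)
    next
      show "\<exists>i\<in>F. c' i \<noteq> 0" using c(2) i0F' F_eq by (auto simp: c'_def)
    next
      fix j assume "j \<in> insert e E"
      then show "(\<Sum>i\<in>F. c' i * a i j) = 0" using key c(3) a'e by auto
    qed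
  qed
qed

definition kmod :: "'l::field set \<Rightarrow> ('l \<Rightarrow> 'b::ab_group_add \<Rightarrow> 'b) \<Rightarrow> bool" where
  "kmod K smul \<longleftrightarrow> (\<forall>a\<in>K. \<forall>b\<in>K. \<forall>x. smul (a + b) x = smul a x + smul b x \<and> smul (a * b) x = smul a (smul b x))
     \<and> (\<forall>a\<in>K. \<forall>x y. smul a (x + y) = smul a x + smul a y) \<and> (\<forall>x. smul 1 x = x)"

definition indep :: "'l::field set \<Rightarrow> ('l \<Rightarrow> 'b::ab_group_add \<Rightarrow> 'b) \<Rightarrow> ('i \<Rightarrow> 'b) \<Rightarrow> 'i set \<Rightarrow> bool" where
  "indep K smul f I \<longleftrightarrow> (\<forall>c. (\<forall>i\<in>I. c i \<in> K) \<longrightarrow> (\<Sum>i\<in>I. smul (c i) (f i)) = 0 \<longrightarrow> (\<forall>i\<in>I. c i = 0))"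

context
  fixes K :: "'l::field set" and smul :: "'l \<Rightarrow> 'b::ab_group_add \<Rightarrow> 'b"
  assumes K: "subfield_of K" and km: "kmod K smul"
begin

lemma sm_add1: "a \<in> K \<Longrightarrow> b \<in> K \<Longrightarrow> smul (a + b) x = smul a x + smul b x"
  using km by (simp add: kmod_def)
lemma sm_mult: "a \<in> K \<Longrightarrow> b \<in> K \<Longrightarrow> smul (a * b) x = smul a (smul b x)"
  using km by (simp add: kmod_def)
lemma sm_add2: "a \<in> K \<Longrightarrow> smul a (x + y) = smul a x + smul a y"
  using km by (simp add: kmod_def)
lemma sm_one: "smul 1 x = x"
  using km by (simp add: kmod_def)
lemma sm_zero1: "smul 0 x = 0"
  using sm_add1[of 0 0 x] subfield_props[OF K] by simp
lemma sm_zero2: "a \<in> K \<Longrightarrow> smul a 0 = 0"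
  using sm_add2[of a 0 0] by simp
lemma sm_neg1: "a \<in> K \<Longrightarrow> smul (- a) x = - smul a x"
proof -
  assume a: "a \<in> K"
  have "smul a x + smul (- a) x = 0"
    using sm_add1[of a "-a" x] subfield_props[OF K] sm_zero1 a by simp
  then show ?thesis by (simp add: add_eq_0_iff)
qed
lemma sm_sum1: "(\<And>i. i \<in> I \<Longrightarrow> c i \<in> K) \<Longrightarrow> smul (\<Sum>i\<in>I. c i) x = (\<Sum>i\<in>I. smul (c i) x)"
proof (induction I rule: infinite_finite_induct)
  case (insert y F) then show ?case using sm_add1 subfield_sum[OF K, of F c] by simp
qed (auto simp: sm_zero1)
lemma sm_sum2: "a \<in> K \<Longrightarrow> smul a (\<Sum>i\<in>I. f i) = (\<Sum>i\<in>I. smul a (f i))"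
proof (induction I rule: infinite_finite_induct)
  case (insert y F) then show ?case using sm_add2 by simp
qed (auto simp: sm_zero2)

lemma combo_span:
  assumes finE: "finite E" and finF: "finite F"
    and aK: "\<forall>i\<in>F. \<forall>j\<in>E. a i j \<in> K" and cK: "\<forall>i\<in>F. c i \<in> K"
  shows "(\<Sum>i\<in>F. smul (c i) (\<Sum>j\<in>E. smul (a i j) (e j))) = (\<Sum>j\<in>E. smul (\<Sum>i\<in>F. c i * a i j) (e j))"
proof -
  have "(\<Sum>i\<in>F. smul (c i) (\<Sum>j\<in>E. smul (a i j) (e j))) = (\<Sum>i\<in>F. \<Sum>j\<in>E. smul (c i * a i j) (e j))"
    using aK cK by (intro sum.cong refl) (simp add: sm_sum2 sm_mult)
  also have "\<dots> = (\<Sum>j\<in>E. \<Sum>i\<in>F. smul (c i * a i j) (e j))" by (rule sum.swap)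
  also have "\<dots> = (\<Sum>j\<in>E. smul (\<Sum>i\<in>F. c i * a i j) (e j))"
    using aK cK by (intro sum.cong refl) (simp add: sm_sum1 subfield_props(4)[OF K])
  finally show ?thesis .
qed

lemma basis_exists:
  assumes "basis_over K smul e I"
  shows "\<exists>c. (\<forall>i\<in>I. c i \<in> K) \<and> (\<forall>i. i \<notin> I \<longrightarrow> c i = 0) \<and> x = (\<Sum>i\<in>I. smul (c i) (e i))"
proof -
  have "\<exists>!c. (\<forall>i\<in>I. c i \<in> K) \<and> (\<forall>i. i \<notin> I \<longrightarrow> c i = 0) \<and> x = (\<Sum>i\<in>I. smul (c i) (e i))"
    using assms unfolding basis_over_def by blast
  then show ?thesis by (rule ex1_implies_ex)
qed

lemma dependent_extra:
  assumes B: "basis_over K smul e E" and finF: "finite F" and card: "card E < card F"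
  shows "\<exists>c. (\<forall>i\<in>F. c i \<in> K) \<and> (\<exists>i\<in>F. c i \<noteq> 0) \<and> (\<Sum>i\<in>F. smul (c i) (f i)) = 0"
proof -
  have finE: "finite E" using B by (simp add: basis_over_def)
  have "\<forall>i. \<exists>a. (\<forall>j\<in>E. a j \<in> K) \<and> f i = (\<Sum>j\<in>E. smul (a j) (e j))"
    using basis_exists[OF B] by metis
  then obtain a where a: "\<And>i. (\<forall>j\<in>E. a i j \<in> K) \<and> f i = (\<Sum>j\<in>E. smul (a i j) (e j))"
    by metis
  obtain c where c: "\<forall>i\<in>F. c i \<in> K" "\<exists>i\<in>F. c i \<noteq> 0" "\<forall>j\<in>E. (\<Sum>i\<in>F. c i * a i j) = 0"
    using homog_system[OF K finE finF card, of a] a by blast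
  have "(\<Sum>i\<in>F. smul (c i) (f i)) = (\<Sum>i\<in>F. smul (c i) (\<Sum>j\<in>E. smul (a i j) (e j)))"
    using a by simp
  also have "\<dots> = (\<Sum>j\<in>E. smul (\<Sum>i\<in>F. c i * a i j) (e j))"
    using combo_span[OF finE finF] a c(1) by blast
  also have "\<dots> = 0" using c(3) by (simp add: sm_zero1)
  finally show ?thesis using c by blast
qed

lemma indep_basis:
  fixes N :: nat
  assumes B: "basis_over K smul e {..<N}" and I: "indep K smul f {..<N}"
  shows "basis_over K smul f {..<N}"
  unfolding basis_over_def
proof (rule conjI[OF finite_lessThan], rule allI)
  fix x
  define g where "g i = (if i = N then x else f i)" for i
  have card: "card {..<N} < card {..<Suc N}" by simp
  obtain c where c: "\<forall>i\<in>{..<Suc N}. c i \<in> K" "\<exists>i\<in>{..<Suc N}. c i \<noteq> 0"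
    "(\<Sum>i\<in>{..<Suc N}. smul (c i) (g i)) = 0"
    using dependent_extra[OF B _ card, of g] by auto
  have sum_split: "(\<Sum>i\<in>{..<Suc N}. smul (c i) (g i)) = (\<Sum>i<N. smul (c i) (f i)) + smul (c N) x"
    by (simp add: g_def)
  have cN: "c N \<noteq> 0"
  proof
    assume "c N = 0"
    then have "(\<Sum>i<N. smul (c i) (f i)) = 0" using c(3) sum_split sm_zero1 by simp
    then have "\<forall>i\<in>{..<N}. c i = 0" using I[unfolded indep_def, rule_format, of c] c(1) by simp
    then show False using c(2) \<open>c N = 0\<close> by (auto simp: less_Suc_eq)
  qed
  have cNK: "c N \<in> K" using c(1) by simp
  define d where "d i = (if i < N then - c i / c N else 0)" for i
  have dK: "\<forall>i\<in>{..<N}. d i \<in> K" using c(1)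
    by (auto simp: d_def intro!: subfield_divide[OF K] subfield_props(5)[OF K] cNK)
  have x_eq: "x = (\<Sum>i\<in>{..<N}. smul (d i) (f i))"
  proof -
    have "smul (c N) x = - (\<Sum>i<N. smul (c i) (f i))"
      using c(3) sum_split by (simp add: eq_neg_iff_add_eq_0 add.commute)
    then have "smul (inverse (c N)) (smul (c N) x) = smul (inverse (c N)) (- (\<Sum>i<N. smul (c i) (f i)))"
      by simp
    moreover have "smul (inverse (c N)) (smul (c N) x) = x"
      using sm_mult[of "inverse (c N)" "c N" x] cN cNK subfield_props(6)[OF K] sm_one by simp
    moreover have "smul (inverse (c N)) (- (\<Sum>i<N. smul (c i) (f i)))
        = (\<Sum>i<N. smul (d i) (f i))"
    proof -
      have "smul (inverse (c N)) (- (\<Sum>i<N. smul (c i) (f i))) = smul (- inverse (c N)) (\<Sum>i<N. smul (c i) (f i))"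
      proof -
        have iK: "inverse (c N) \<in> K" using cNK subfield_props(6)[OF K] by simp
        have m1: "- 1 \<in> K" using subfield_props(2,5)[OF K] by simp
        have "- (\<Sum>i<N. smul (c i) (f i)) = smul (- 1) (\<Sum>i<N. smul (c i) (f i))"
          using sm_neg1[of 1] subfield_props(2)[OF K] sm_one by simp
        then have "smul (inverse (c N)) (- (\<Sum>i<N. smul (c i) (f i))) = smul (inverse (c N) * - 1) (\<Sum>i<N. smul (c i) (f i))"
          using sm_mult[OF iK m1] by simp
        then show ?thesis by simp
      qed
      also have "\<dots> = (\<Sum>i<N. smul (- inverse (c N) * c i) (f i))"
      proof -
        have nK: "- inverse (c N) \<in> K" using cNK subfield_props[OF K] by simp
        have "smul (- inverse (c N)) (\<Sum>i<N. smul (c i) (f i)) = (\<Sum>i<N. smul (- inverse (c N)) (smul (c i) (f i)))"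
          by (rule sm_sum2[OF nK])
        also have "\<dots> = (\<Sum>i<N. smul (- inverse (c N) * c i) (f i))"
          by (intro sum.cong refl sm_mult[symmetric] nK) (use c(1) in auto)
        finally show ?thesis .
      qed
      also have "\<dots> = (\<Sum>i<N. smul (d i) (f i))"
        by (intro sum.cong refl) (simp add: d_def field_simps)
      finally show ?thesis .
    qed
    ultimately show ?thesis by simp
  qed
  show "\<exists>!c. (\<forall>i\<in>{..<N}. c i \<in> K) \<and> (\<forall>i. i \<notin> {..<N} \<longrightarrow> c i = 0) \<and> x = (\<Sum>i\<in>{..<N}. smul (c i) (f i))"
  proof (rule ex1I[of _ d])
    show "(\<forall>i\<in>{..<N}. d i \<in> K) \<and> (\<forall>i. i \<notin> {..<N} \<longrightarrow> d i = 0) \<and> x = (\<Sum>i\<in>{..<N}. smul (d i) (f i))"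
      using dK x_eq by (simp add: d_def)
  next
    fix c' assume c': "(\<forall>i\<in>{..<N}. c' i \<in> K) \<and> (\<forall>i. i \<notin> {..<N} \<longrightarrow> c' i = 0) \<and> x = (\<Sum>i\<in>{..<N}. smul (c' i) (f i))"
    have "(\<Sum>i\<in>{..<N}. smul (c' i - d i) (f i)) = 0"
    proof -
      have "(\<Sum>i\<in>{..<N}. smul (c' i - d i) (f i)) = (\<Sum>i\<in>{..<N}. smul (c' i) (f i) - smul (d i) (f i))"
        using c' dK by (intro sum.cong refl)
          (metis diff_conv_add_uminus sm_add1 sm_neg1 subfield_props(5)[OF K] lessThan_iff)
      then show ?thesis using c' x_eq by (simp add: sum_subtractf)
    qed
    moreover have "\<forall>i\<in>{..<N}. c' i - d i \<in> K" using c' dK by (auto intro!: subfield_diff[OF K])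
    ultimately have "\<forall>i\<in>{..<N}. c' i - d i = 0" using I[unfolded indep_def, rule_format, of "\<lambda>i. c' i - d i"]
      by blast
    show "c' = d"
    proof (rule ext)
      fix i show "c' i = d i"
      proof (cases "i < N")
        case True then show ?thesis using \<open>\<forall>i\<in>{..<N}. c' i - d i = 0\<close> by simp
      next
        case False then show ?thesis using c' by (simp add: d_def)
      qed
    qed
  qed
qed

lemma basis_unique:
  assumes B: "basis_over K smul e I"
    and c: "\<forall>i\<in>I. c i \<in> K" "\<forall>i. i \<notin> I \<longrightarrow> c i = 0"
    and d: "\<forall>i\<in>I. d i \<in> K" "\<forall>i. i \<notin> I \<longrightarrow> d i = 0"
    and eq: "(\<Sum>i\<in>I. smul (c i) (e i)) = (\<Sum>i\<in>I. smul (d i) (e i))"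
  shows "c = d"
proof -
  define x where "x = (\<Sum>i\<in>I. smul (c i) (e i))"
  define P where "P y \<longleftrightarrow> (\<forall>i\<in>I. y i \<in> K) \<and> (\<forall>i. i \<notin> I \<longrightarrow> y i = 0) \<and> x = (\<Sum>i\<in>I. smul (y i) (e i))" for y
  have ex: "\<exists>!y. P y" using B unfolding basis_over_def P_def by blast
  have Pc: "P c" using c by (simp add: P_def x_def)
  have Pd: "P d" using d eq by (simp add: P_def x_def)
  show ?thesis using ex Pc Pd by blast
qed

lemma basis_indep:
  assumes B: "basis_over K smul e I"
  shows "indep K smul e I"
  unfolding indep_def
proof (intro allI impI ballI)
  fix c i assume cK: "\<forall>i\<in>I. c i \<in> K" and s: "(\<Sum>i\<in>I. smul (c i) (e i)) = 0" and i: "i \<in> I"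
  define c' where "c' j = (if j \<in> I then c j else 0)" for j
  have "(\<Sum>i\<in>I. smul (c' i) (e i)) = (\<Sum>i\<in>I. smul (c i) (e i))"
    by (intro sum.cong refl) (simp add: c'_def)
  also have "\<dots> = (\<Sum>i\<in>I. smul ((\<lambda>_. 0) i) (e i))"
    using s by (simp add: sm_zero1)
  finally have "c' = (\<lambda>_. 0)" using cK subfield_props[OF K]
    by (intro basis_unique[OF B]) (auto simp: c'_def)
  then have "c' i = 0" by simp
  then show "c i = 0" using i by (simp add: c'_def)
qed

end

section \<open>Digits\<close>

lemma digit_Suc: "digit p s (Suc j) = digit p (s div p) j"
  by (simp add: digit_def div_mult2_eq mult.commute)

lemma digit_0: "digit p s 0 = s mod p"
  by (simp add: digit_def)

lemma digit_lt: "p > 0 \<Longrightarrow> digit p s j < p"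
  by (simp add: digit_def)

lemma num_digits: "p > 1 \<Longrightarrow> s < p ^ n \<Longrightarrow> s = (\<Sum>j<n. digit p s j * p ^ j)"
proof (induction n arbitrary: s)
  case 0 then show ?case by simp
next
  case (Suc n)
  have "s div p < p ^ n" using Suc.prems
    by (simp add: less_mult_imp_div_less mult.commute)
  then have IH: "s div p = (\<Sum>j<n. digit p (s div p) j * p ^ j)" using Suc by blast
  have "(\<Sum>j<Suc n. digit p s j * p ^ j) = digit p s 0 + (\<Sum>j<n. digit p s (Suc j) * p ^ Suc j)"
    by (simp add: sum.lessThan_Suc_shift del: sum.lessThan_Suc)
  also have "(\<Sum>j<n. digit p s (Suc j) * p ^ Suc j) = p * (\<Sum>j<n. digit p (s div p) j * p ^ j)"
    by (simp add: digit_Suc sum_distrib_left algebra_simps)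
  finally show ?case using IH by (simp add: digit_0)
qed

lemma digit_sum_bound: "(p::nat) > 0 \<Longrightarrow> (\<forall>j<n. d j < p) \<Longrightarrow> (\<Sum>j<n. d j * p ^ j) < p ^ n"
proof (induction n)
  case 0 then show ?case by simp
next
  case (Suc n)
  have "(\<Sum>j<Suc n. d j * p ^ j) = (\<Sum>j<n. d j * p ^ j) + d n * p ^ n" by simp
  also have "\<dots> < p ^ n + d n * p ^ n" using Suc by simp
  also have "\<dots> = (d n + 1) * p ^ n" by simp
  also have "\<dots> \<le> p * p ^ n" using Suc.prems(2) by (intro mult_right_mono) auto
  finally show ?case by simp
qed

lemma digit_sum: "p > 1 \<Longrightarrow> (\<forall>j<n. d j < p) \<Longrightarrow> k < n \<Longrightarrow> digit p (\<Sum>j<n. d j * p ^ j) k = d k"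
proof (induction n arbitrary: d k)
  case 0 then show ?case by simp
next
  case (Suc n)
  have eq: "(\<Sum>j<Suc n. d j * p ^ j) = d 0 + p * (\<Sum>j<n. d (Suc j) * p ^ j)"
    by (simp add: sum.lessThan_Suc_shift sum_distrib_left algebra_simps del: sum.lessThan_Suc)
  have d0: "d 0 < p" using Suc.prems by simp
  show ?case
  proof (cases k)
    case 0 then show ?thesis using eq d0 by (simp add: digit_0)
  next
    case (Suc k')
    have "(d 0 + p * (\<Sum>j<n. d (Suc j) * p ^ j)) div p = (\<Sum>j<n. d (Suc j) * p ^ j)"
      using d0 Suc.prems(1) by simp
    then show ?thesis using Suc.IH[of "\<lambda>j. d (Suc j)" k'] Suc.prems Suc eq
      by (simp add: digit_Suc)
  qed
qed

lemma geom_digits: "(p::nat) > 0 \<Longrightarrow> (\<Sum>j<n. (p - 1) * p ^ j) = p ^ n - 1"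
proof (induction n)
  case (Suc n)
  have "p ^ n \<ge> 1" using Suc.prems by simp
  then show ?case using Suc by (simp add: algebra_simps diff_mult_distrib)
qed simp

lemma digit_top: "p > 1 \<Longrightarrow> j < n \<Longrightarrow> digit p (p ^ n - 1) j = p - 1"
  using digit_sum[of p n "\<lambda>_. p - 1" j] geom_digits[of p n] by simp

lemma shift_b_reindex:
  "shift_b p n b s = (\<Sum>j<n. int (digit p s j) * int p ^ j * b (n - j))"
  unfolding shift_b_def
  by (rule sum.reindex_bij_witness[of _ "\<lambda>j. n - j" "\<lambda>i. n - i"]) auto

definition Bsum :: "nat \<Rightarrow> nat \<Rightarrow> (nat \<Rightarrow> int) \<Rightarrow> (nat \<Rightarrow> nat) \<Rightarrow> int" where
  "Bsum p n b d = (\<Sum>j<n. int (d j) * int p ^ j * b (n - j))"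

lemma shift_b_Bsum: "shift_b p n b s = Bsum p n b (digit p s)"
  by (simp add: shift_b_reindex Bsum_def)

context
  fixes p n :: nat and b :: "nat \<Rightarrow> int"
  assumes prime_p: "prime p" and bcop: "\<forall>i\<in>{1..n}. \<not> int p dvd b i"
begin

lemma p_gt1: "p > 1" using prime_p prime_gt_1_nat by blast

lemma Bsum_inj:
  assumes d: "\<forall>j<n. d j < p" and d': "\<forall>j<n. d' j < p"
    and cong: "Bsum p n b d mod (int p ^ n) = Bsum p n b d' mod (int p ^ n)"
  shows "\<forall>j<n. d j = d' j"
proof (rule ccontr)
  assume "\<not> (\<forall>j<n. d j = d' j)"
  then have ex: "\<exists>j. j < n \<and> d j \<noteq> d' j" by blast
  define j0 where "j0 = (LEAST j. j < n \<and> d j \<noteq> d' j)"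
  have j0: "j0 < n" "d j0 \<noteq> d' j0" using LeastI_ex[OF ex] by (auto simp: j0_def)
  have below: "j < j0 \<Longrightarrow> d j = d' j" for j
    using not_less_Least[of j "\<lambda>j. j < n \<and> d j \<noteq> d' j"] j0(1) by (auto simp: j0_def)
  define t where "t j = (int (d j) - int (d' j)) * int p ^ j * b (n - j)" for j
  have diff: "Bsum p n b d - Bsum p n b d' = (\<Sum>j<n. t j)"
    by (simp add: Bsum_def t_def sum_subtractf[symmetric] algebra_simps)
  have "(\<Sum>j<n. t j) = t j0 + (\<Sum>j\<in>{..<n} - {j0}. t j)"
    using j0(1) by (simp add: sum.remove)
  moreover have "int p ^ Suc j0 dvd (\<Sum>j\<in>{..<n} - {j0}. t j)"
  proof (rule dvd_sum)
    fix j assume j: "j \<in> {..<n} - {j0}"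
    show "int p ^ Suc j0 dvd t j"
    proof (cases "j < j0")
      case True then show ?thesis by (simp add: t_def below)
    next
      case False
      then have "Suc j0 \<le> j" using j by auto
      then have "int p ^ Suc j0 dvd int p ^ j" by (rule le_imp_power_dvd)
      then show ?thesis by (simp add: t_def)
    qed
  qed
  moreover have "int p ^ Suc j0 dvd (\<Sum>j<n. t j)"
  proof -
    have h1: "int p ^ n dvd Bsum p n b d - Bsum p n b d'" using cong by (simp add: mod_eq_dvd_iff)
    have h2: "int p ^ Suc j0 dvd int p ^ n" using j0(1) by (intro le_imp_power_dvd) simp
    have "int p ^ Suc j0 dvd Bsum p n b d - Bsum p n b d'" by (rule dvd_trans[OF h2 h1])
    then show ?thesis by (simp only: diff)
  qed
  ultimately have tj0: "int p ^ Suc j0 dvd t j0" using dvd_add_left_iff by metis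
  have e1: "t j0 = int p ^ j0 * ((int (d j0) - int (d' j0)) * b (n - j0))"
    by (simp only: t_def ac_simps)
  have e2: "int p ^ Suc j0 = int p ^ j0 * int p" by (simp only: power_Suc2)
  have "int p ^ j0 * int p dvd int p ^ j0 * ((int (d j0) - int (d' j0)) * b (n - j0))"
    using tj0 by (simp only: e1 e2)
  moreover have "int p ^ j0 \<noteq> 0" using p_gt1 by simp
  ultimately have pd: "int p dvd (int (d j0) - int (d' j0)) * b (n - j0)"
    using dvd_mult_cancel_left by blast
  have pr: "prime (int p)" using prime_p by simp
  have nb: "\<not> int p dvd b (n - j0)" using bcop j0(1) by simp
  have pdd: "int p dvd int (d j0) - int (d' j0)"
    using pd nb prime_dvd_mult_iff[OF pr] by blast
  have lt: "\<bar>int (d j0) - int (d' j0)\<bar> < int p"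
  proof -
    have "d j0 < p" "d' j0 < p" using d d' j0(1) by auto
    then show ?thesis by linarith
  qed
  have "int (d j0) - int (d' j0) = 0"
  proof (rule ccontr)
    assume "int (d j0) - int (d' j0) \<noteq> 0"
    from dvd_imp_le_int[OF this pdd] have "\<bar>int p\<bar> \<le> \<bar>int (d j0) - int (d' j0)\<bar>" .
    then show False using lt by simp
  qed
  then show False using j0(2) by simp
qed

lemma shift_b_inj:
  assumes "s < p ^ n" "s' < p ^ n" "shift_b p n b s mod (int p ^ n) = shift_b p n b s' mod (int p ^ n)"
  shows "s = s'"
proof -
  have "\<forall>j<n. digit p s j = digit p s' j"
    using Bsum_inj[of "digit p s" "digit p s'"] assms p_gt1 by (simp add: digit_lt shift_b_Bsum)
  then have "(\<Sum>j<n. digit p s j * p ^ j) = (\<Sum>j<n. digit p s' j * p ^ j)" by simp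
  then show ?thesis using num_digits[OF p_gt1 assms(1)] num_digits[OF p_gt1 assms(2)] by simp
qed

lemma shift_b_surj:
  "\<exists>s<p ^ n. shift_b p n b s mod (int p ^ n) = r mod (int p ^ n)"
proof -
  let ?f = "\<lambda>s. shift_b p n b s mod (int p ^ n)"
  have inj: "inj_on ?f {..<p ^ n}"
  proof (rule inj_onI)
    fix x y assume "x \<in> {..<p ^ n}" "y \<in> {..<p ^ n}" "?f x = ?f y"
    then show "x = y" using shift_b_inj[of x y] by simp
  qed
  have pos: "int p ^ n > 0" using p_gt1 by simp
  have sub: "?f ` {..<p ^ n} \<subseteq> {0..<int p ^ n}"
  proof
    fix y assume "y \<in> ?f ` {..<p ^ n}"
    then obtain s where "y = ?f s" by blast
    then show "y \<in> {0..<int p ^ n}" using pos_mod_sign[OF pos] pos_mod_bound[OF pos] by simp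
  qed
  have "card (?f ` {..<p ^ n}) = card {..<p ^ n}" by (rule card_image[OF inj])
  then have "card (?f ` {..<p ^ n}) = p ^ n" by simp
  moreover have "card {0..<int p ^ n} = p ^ n"
  proof -
    have "int p ^ n = int (p ^ n)" by simp
    then show ?thesis by (simp only: card_atLeastLessThan_int)
  qed
  ultimately have "?f ` {..<p ^ n} = {0..<int p ^ n}"
    using sub by (intro card_subset_eq) simp_all
  moreover have "r mod (int p ^ n) \<in> {0..<int p ^ n}" using pos_mod_sign[OF pos] pos_mod_bound[OF pos] by simp
  ultimately have "r mod (int p ^ n) \<in> ?f ` {..<p ^ n}" by simp
  then obtain s where s1: "s \<in> {..<p ^ n}" and s2: "r mod (int p ^ n) = ?f s" by (rule imageE)
  show ?thesis
  proof (intro exI conjI)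
    show "s < p ^ n" using s1 by simp
    show "shift_b p n b s mod (int p ^ n) = r mod (int p ^ n)" using s2 by (rule sym)
  qed
qed

lemma a_fun_spec:
  "a_fun p n b t < p ^ n \<and> shift_b p n b (a_fun p n b t) mod (int p ^ n) = (- t) mod (int p ^ n)"
proof -
  obtain s where s: "s < p ^ n" "shift_b p n b s mod (int p ^ n) = (- t) mod (int p ^ n)"
    using shift_b_surj[of "- t"] by blast
  have "\<exists>!s. s < p ^ n \<and> shift_b p n b s mod (int p ^ n) = (- t) mod (int p ^ n)"
  proof (rule ex1I[of _ s])
    fix y assume "y < p ^ n \<and> shift_b p n b y mod (int p ^ n) = (- t) mod (int p ^ n)"
    then show "y = s" using s shift_b_inj[of y s] by simp
  qed (use s in simp)
  then show ?thesis unfolding a_fun_def by (rule theI')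
qed

lemma a_fun_eqI:
  "s < p ^ n \<Longrightarrow> shift_b p n b s mod (int p ^ n) = (- t) mod (int p ^ n) \<Longrightarrow> a_fun p n b t = s"
proof -
  assume "s < p ^ n" "shift_b p n b s mod (int p ^ n) = (- t) mod (int p ^ n)"
  then show ?thesis using a_fun_spec[of t] shift_b_inj[of "a_fun p n b t" s] by simp
qed

lemma a_fun_mod: "t mod (int p ^ n) = t' mod (int p ^ n) \<Longrightarrow> a_fun p n b t = a_fun p n b t'"
proof -
  assume "t mod (int p ^ n) = t' mod (int p ^ n)"
  then have "(- t) mod (int p ^ n) = (- t') mod (int p ^ n)" by (rule mod_minus_cong)
  then show ?thesis unfolding a_fun_def by simp
qed

lemma a_fun_dec:
  assumes i: "i \<in> {1..n}" and dg: "digit p (a_fun p n b t) (n - i) \<ge> 1"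
  shows "\<forall>j<n. digit p (a_fun p n b (t + int p ^ (n - i) * b i)) j
               = digit p (a_fun p n b t) j - (if j = n - i then 1 else 0)"
proof -
  let ?a = "a_fun p n b t"
  define d where "d j = digit p ?a j - (if j = n - i then 1 else 0)" for j
  define s1 where "s1 = (\<Sum>j<n. d j * p ^ j)"
  have dlt: "\<forall>j<n. d j < p"
  proof (intro allI impI)
    fix j have "d j \<le> digit p ?a j" by (simp add: d_def)
    moreover have "digit p ?a j < p" using p_gt1 by (simp add: digit_lt)
    ultimately show "d j < p" by simp
  qed
  have s1lt: "s1 < p ^ n" unfolding s1_def using p_gt1 dlt by (intro digit_sum_bound) auto
  have dig1: "\<forall>j<n. digit p s1 j = d j" unfolding s1_def using digit_sum[OF p_gt1 dlt] by blast
  have "shift_b p n b s1 = Bsum p n b (digit p s1)" by (rule shift_b_Bsum)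
  also have "\<dots> = Bsum p n b d" unfolding Bsum_def using dig1 by (intro sum.cong) auto
  also have "\<dots> = Bsum p n b (digit p ?a) - int p ^ (n - i) * b i"
  proof -
    have "Bsum p n b (digit p ?a) - Bsum p n b d
        = (\<Sum>j<n. (if j = n - i then int p ^ j * b (n - j) else 0))"
      unfolding Bsum_def sum_subtractf[symmetric]
    proof (intro sum.cong refl)
      fix j
      have e: "int (digit p ?a j) - int (d j) = (if j = n - i then 1 else 0)"
        using dg by (simp add: d_def of_nat_diff)
      have "int (digit p ?a j) * int p ^ j * b (n - j) - int (d j) * int p ^ j * b (n - j)
          = (int (digit p ?a j) - int (d j)) * (int p ^ j * b (n - j))"
        by (simp add: algebra_simps)
      then show "int (digit p ?a j) * int p ^ j * b (n - j) - int (d j) * int p ^ j * b (n - j)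
          = (if j = n - i then int p ^ j * b (n - j) else 0)"
        using e by simp
    qed
    also have "\<dots> = int p ^ (n - i) * b i" using i by (simp add: sum.delta)
    finally show ?thesis by simp
  qed
  finally have s1eq: "shift_b p n b s1 = Bsum p n b (digit p ?a) - int p ^ (n - i) * b i" .
  have "shift_b p n b s1 mod int p ^ n = (- (t + int p ^ (n - i) * b i)) mod int p ^ n"
  proof -
    have "Bsum p n b (digit p ?a) mod int p ^ n = (- t) mod int p ^ n"
      using a_fun_spec[of t] by (simp add: shift_b_Bsum)
    then have "(Bsum p n b (digit p ?a) - int p ^ (n - i) * b i) mod int p ^ n
        = (- t - int p ^ (n - i) * b i) mod int p ^ n"
      by (rule mod_diff_cong) simp
    then show ?thesis unfolding s1eq by (simp add: algebra_simps)
  qed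
  then have "a_fun p n b (t + int p ^ (n - i) * b i) = s1" using s1lt by (intro a_fun_eqI)
  then show ?thesis using dig1 by (simp add: d_def)
qed

lemma a_fun_top_exists: "\<exists>h'. h' \<ge> h \<and> a_fun p n b h' = p ^ n - 1"
proof -
  define t0 where "t0 = - shift_b p n b (p ^ n - 1)"
  have "a_fun p n b t0 = p ^ n - 1" using p_gt1 by (intro a_fun_eqI) (auto simp: t0_def)
  moreover define h' where "h' = h + (t0 - h) mod (int p ^ n)"
  have "h' mod (int p ^ n) = (h + (t0 - h)) mod (int p ^ n)" unfolding h'_def by (rule mod_add_right_eq)
  then have "h' mod (int p ^ n) = t0 mod (int p ^ n)" by simp
  moreover have "(t0 - h) mod (int p ^ n) \<ge> 0" using p_gt1 by (intro pos_mod_sign) simp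
  then have "h' \<ge> h" by (simp add: h'_def)
  ultimately show ?thesis using a_fun_mod[of h' t0] by auto
qed

end

locale scaf =
  fixes K :: "'l::field set" and v :: "'l \<Rightarrow> int"
    and \<iota> :: "'l \<Rightarrow> 'a::ring_1" and act :: "'a \<Rightarrow> 'l \<Rightarrow> 'l"
    and p n :: nat and b :: "nat \<Rightarrow> int" and T :: enat
    and lam :: "int \<Rightarrow> 'l" and Psi :: "nat \<Rightarrow> 'a"
  assumes prime_p: "prime p"
    and K_subfield: "subfield_of K"
    and val: "normalized_discrete_valuation v"
    and degree: "\<exists>e::nat \<Rightarrow> 'l. basis_over K (*) e {..<p ^ n}"
    and totally_ramified: "{v x | x. x \<in> K \<and> x \<noteq> 0} = {int p ^ n * z | z. True}"
    and A_alg: "K_algebra K \<iota>"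
    and A_dim: "\<exists>e::nat \<Rightarrow> 'a. basis_over K (\<lambda>k a. \<iota> k * a) e {..<p ^ n}"
    and action: "alg_action K \<iota> act"
    and scaffold: "is_scaffold K v act p n b T lam Psi"
begin

abbreviation P where "P \<equiv> pow_ideal v"
abbreviation N where "N \<equiv> p ^ n"

lemmas Kp = subfield_props[OF K_subfield]
lemmas vv = v_mult[OF val] v_add[OF val] v_one[OF val] v_uminus[OF val] v_inverse[OF val]
lemmas PP = pow_ideal_0 pow_ideal_mono[OF val] pow_ideal_add[OF val] pow_ideal_uminus[OF val]
  pow_ideal_diff[OF val] pow_ideal_mult[OF val] pow_ideal_sum[OF val]

lemma p_gt1: "p > 1" using prime_p prime_gt_1_nat by blast
lemma N_pos: "int p ^ n > 0" using p_gt1 by simp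

lemma bcop: "\<forall>i\<in>{1..n}. \<not> int p dvd b i"
  using scaffold by (simp add: is_scaffold_def)
lemma T1: "T \<ge> 1" using scaffold by (simp add: is_scaffold_def)
lemma lam_nz: "lam t \<noteq> 0" using scaffold by (simp add: is_scaffold_def)
lemma v_lam: "v (lam t) = t" using scaffold by (simp add: is_scaffold_def)
lemma lam_ratio: "t1 mod (int p ^ n) = t2 mod (int p ^ n) \<Longrightarrow> lam t1 * inverse (lam t2) \<in> K"
  using scaffold by (simp add: is_scaffold_def)
lemma Psi_one: "i \<in> {1..n} \<Longrightarrow> act (Psi i) 1 = 0"
  using scaffold by (simp add: is_scaffold_def)
lemma Psi_lam: "i \<in> {1..n} \<Longrightarrow> \<exists>u\<in>val_units K v.
   (if digit p (a_fun p n b t) (n - i) \<ge> 1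
    then cong_tol v T (t + int p ^ (n - i) * b i) (act (Psi i) (lam t)) (u * lam (t + int p ^ (n - i) * b i))
    else cong_tol v T (t + int p ^ (n - i) * b i) (act (Psi i) (lam t)) 0)"
  using scaffold unfolding is_scaffold_def Let_def by blast

lemma cong_tolD: "cong_tol v T t x y \<Longrightarrow> x - y \<in> P (t + 1)"
proof -
  assume c: "cong_tol v T t x y"
  show ?thesis
  proof (cases "x = y")
    case True then show ?thesis by (simp add: pow_ideal_def)
  next
    case False
    then obtain T' :: nat where T': "T = enat T'" "v (x - y) \<ge> t + int T'"
      using c by (auto simp: cong_tol_def)
    have "T' \<ge> 1" using T1 T'(1) by (simp add: one_enat_def)
    then show ?thesis using T'(2) by (simp add: pow_ideal_def)
  qed
qed

lemma units_iff: "u \<in> val_units K v \<longleftrightarrow> u \<in> K \<and> u \<noteq> 0 \<and> v u = 0"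
  by (simp add: val_units_def)

lemma val_ring_iff: "c \<in> val_ring K v \<longleftrightarrow> c \<in> K \<and> c \<in> P 0"
  by (simp add: val_ring_def)

lemma act_mult: "act (a * c) x = act a (act c x)" using action unfolding alg_action_def by blast
lemma act_one: "act 1 x = x" using action unfolding alg_action_def by blast
lemma act_add1: "act (a + c) x = act a x + act c x" using action unfolding alg_action_def by blast
lemma act_add2: "act a (x + y) = act a x + act a y" using action unfolding alg_action_def by blast
lemma act_iota: "k \<in> K \<Longrightarrow> act (\<iota> k) x = k * x" using action unfolding alg_action_def by blast
lemma act_smul: "k \<in> K \<Longrightarrow> act a (k * x) = k * act a x" using action unfolding alg_action_def by blast
lemma act_zero1: "act 0 x = 0"
proof -
  have h: "act 0 x = act 0 x + act 0 x" using act_add1[of 0 0 x] by (simp only: add_0_left)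
  show ?thesis using h[symmetric] add_cancel_left_right by blast
qed
lemma act_zero2: "act a 0 = 0"
proof -
  have h: "act a 0 = act a 0 + act a 0" using act_add2[of a 0 0] by (simp only: add_0_left)
  show ?thesis using h[symmetric] add_cancel_left_right by blast
qed
lemma act_neg1: "act (- a) x = - act a x"
proof -
  have "act a x + act (- a) x = 0" using act_add1[of a "- a" x] act_zero1 by simp
  then show ?thesis by (simp add: add_eq_0_iff)
qed
lemma act_sum1: "act (\<Sum>i\<in>I. f i) x = (\<Sum>i\<in>I. act (f i) x)"
  by (induction I rule: infinite_finite_induct) (auto simp: act_zero1 act_add1)
lemma act_sum2: "act a (\<Sum>i\<in>I. f i) = (\<Sum>i\<in>I. act a (f i))"
  by (induction I rule: infinite_finite_induct) (auto simp: act_zero2 act_add2)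
lemma act_iota_mult: "k \<in> K \<Longrightarrow> act (\<iota> k * a) x = k * act a x"
  by (simp add: act_mult act_iota)

lemma iota_add: "x \<in> K \<Longrightarrow> y \<in> K \<Longrightarrow> \<iota> (x + y) = \<iota> x + \<iota> y"
  using A_alg unfolding K_algebra_def by blast
lemma iota_mult: "x \<in> K \<Longrightarrow> y \<in> K \<Longrightarrow> \<iota> (x * y) = \<iota> x * \<iota> y"
  using A_alg unfolding K_algebra_def by blast
lemma iota_one: "\<iota> 1 = 1"
  using A_alg unfolding K_algebra_def by blast
lemma iota_zero: "\<iota> 0 = 0"
proof -
  have h: "\<iota> 0 = \<iota> 0 + \<iota> 0" using iota_add[of 0 0] Kp(1) by (simp only: add_0_left)
  show ?thesis using h[symmetric] add_cancel_left_right by blast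
qed
lemma iota_neg: "x \<in> K \<Longrightarrow> \<iota> (- x) = - \<iota> x"
proof -
  assume x: "x \<in> K"
  have "\<iota> x + \<iota> (- x) = 0" using iota_add[of x "- x"] Kp(5)[OF x] x iota_zero by simp
  then show ?thesis by (simp add: add_eq_0_iff)
qed

lemma kmod_L: "kmod K ((*) :: 'l \<Rightarrow> 'l \<Rightarrow> 'l)"
  by (simp add: kmod_def algebra_simps)

lemma kmod_A: "kmod K (\<lambda>k a. \<iota> k * a)"
  by (simp add: kmod_def iota_add iota_mult iota_one algebra_simps)

lemma K_val_dvd: "k \<in> K \<Longrightarrow> k \<noteq> 0 \<Longrightarrow> int p ^ n dvd v k"
proof -
  assume "k \<in> K" "k \<noteq> 0"
  then have "v k \<in> {v x | x. x \<in> K \<and> x \<noteq> 0}" by blast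
  then have "v k \<in> {int p ^ n * z | z. True}" using totally_ramified by simp
  then obtain z where "v k = int p ^ n * z" by blast
  then show ?thesis by simp
qed

lemma K_val_exists: "\<exists>k\<in>K. k \<noteq> 0 \<and> v k = int p ^ n * z"
proof -
  have "int p ^ n * z \<in> {int p ^ n * z | z. True}" by blast
  then have "int p ^ n * z \<in> {v x | x. x \<in> K \<and> x \<noteq> 0}" by (simp only: totally_ramified)
  then obtain x where "x \<in> K" "x \<noteq> 0" "int p ^ n * z = v x" by blast
  then show ?thesis by metis
qed

lemma lam_reduce:
  assumes c: "c \<in> K" "c \<noteq> 0"
  shows "\<exists>c'. c' \<in> val_units K v \<and> c * lam t0 = c' * lam (v c + t0)"
proof -
  let ?t = "v c + t0"
  obtain z where z: "v c = int p ^ n * z" using K_val_dvd[OF c] by (auto elim: dvdE)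
  have "t0 mod (int p ^ n) = ?t mod (int p ^ n)" unfolding z by simp
  then have r: "lam t0 * inverse (lam ?t) \<in> K" by (rule lam_ratio)
  define c' where "c' = c * (lam t0 * inverse (lam ?t))"
  have c'K: "c' \<in> K" unfolding c'_def using c r Kp(4) by blast
  have c'nz: "c' \<noteq> 0" using c lam_nz by (simp add: c'_def)
  have i1: "inverse (lam ?t) \<noteq> 0" using lam_nz by simp
  have "v (lam t0 * inverse (lam ?t)) = v (lam t0) + v (inverse (lam ?t))"
    by (rule vv(1)[OF lam_nz i1])
  also have "\<dots> = t0 - ?t" using vv(5)[OF lam_nz[of ?t]] v_lam by simp
  finally have e1: "v (lam t0 * inverse (lam ?t)) = - v c" by simp
  have "v c' = v c + v (lam t0 * inverse (lam ?t))"
    unfolding c'_def using c(2) lam_nz i1 by (intro vv(1)) simp_all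
  then have vc': "v c' = 0" using e1 by simp
  have "c' * lam ?t = c * lam t0" using lam_nz by (simp add: c'_def)
  then show ?thesis using c'K c'nz vc' by (auto simp: units_iff)
qed

lemma unit_P0: "u \<in> val_units K v \<Longrightarrow> u \<in> P 0"
  by (simp add: units_iff pow_ideal_def)

lemma lam_P: "lam t \<in> P t"
  using v_lam by (simp add: pow_ideal_def)

lemma unit_lam_P: "u \<in> val_units K v \<Longrightarrow> u * lam t \<in> P t"
proof -
  assume "u \<in> val_units K v"
  then have "u * lam t \<in> P (0 + t)" by (intro pow_ideal_mult[OF val] unit_P0 lam_P)
  then show ?thesis by simp
qed

lemma unit_lam_v: "u \<in> val_units K v \<Longrightarrow> u * lam t \<noteq> 0 \<and> v (u * lam t) = t"
proof -
  assume u: "u \<in> val_units K v"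
  then have "u \<noteq> 0" "v u = 0" by (simp_all add: units_iff)
  moreover have "v (u * lam t) = v u + v (lam t)" using \<open>u \<noteq> 0\<close> lam_nz by (rule vv(1))
  ultimately show ?thesis using lam_nz v_lam by simp
qed

definition lamN :: "nat \<Rightarrow> 'l" where "lamN j = lam (int j)"

lemma K_term_val: "c \<in> K \<Longrightarrow> c \<noteq> 0 \<Longrightarrow> v (c * lam t) = v c + t"
proof -
  assume "c \<noteq> 0"
  then have "v (c * lam t) = v c + v (lam t)" using lam_nz by (rule vv(1))
  then show ?thesis using v_lam by simp
qed

lemma lamN_indep: "indep K (*) lamN {..<p ^ n}"
  unfolding indep_def
proof (intro allI impI ballI)
  fix c i assume cK: "\<forall>i\<in>{..<p ^ n}. c i \<in> K" and s: "(\<Sum>i\<in>{..<p ^ n}. c i * lamN i) = 0"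
    and i: "i \<in> {..<p ^ n}"
  have "c i * lamN i = 0"
  proof (rule distinct_val_sum_zero[OF val _ _ s i])
    show "finite {..<p ^ n}" by simp
    fix j k assume j: "j \<in> {..<p ^ n}" and k: "k \<in> {..<p ^ n}" and
      nj: "c j * lamN j \<noteq> 0" and nk: "c k * lamN k \<noteq> 0" and eq: "v (c j * lamN j) = v (c k * lamN k)"
    have cj: "c j \<noteq> 0" "c k \<noteq> 0" using nj nk by auto
    have "v (c j) + int j = v (c k) + int k"
      using eq cj cK j k by (simp add: lamN_def K_term_val)
    moreover have "int p ^ n dvd v (c j)" "int p ^ n dvd v (c k)"
      using cj cK j k K_val_dvd by auto
    ultimately have "int p ^ n dvd v (c k) - v (c j)" by (intro dvd_diff)
    moreover have "int j - int k = v (c k) - v (c j)" using \<open>v (c j) + int j = v (c k) + int k\<close> by linarith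
    ultimately have "int p ^ n dvd int j - int k" by simp
    then have "int j mod int p ^ n = int k mod int p ^ n" by (simp add: mod_eq_dvd_iff)
    moreover have "int j mod int p ^ n = int j"
    proof (rule mod_pos_pos_trivial)
      have "int j < int (p ^ n)" using j by simp
      then show "int j < int p ^ n" by simp
    qed simp
    moreover have "int k mod int p ^ n = int k"
    proof (rule mod_pos_pos_trivial)
      have "int k < int (p ^ n)" using k by simp
      then show "int k < int p ^ n" by simp
    qed simp
    ultimately show "j = k" by simp
  qed
  then show "c i = 0" using lam_nz by (simp add: lamN_def)
qed

lemma lamN_basis: "basis_over K (*) lamN {..<p ^ n}"
proof -
  obtain e where "basis_over K (*) e {..<p ^ n}" using degree by blast
  then show ?thesis by (rule indep_basis[OF K_subfield kmod_L _ lamN_indep])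
qed

end

context scaf begin

lemma int_lt_N: "j < p ^ n \<Longrightarrow> int j < int p ^ n"
proof -
  assume "j < p ^ n"
  then have "int j < int (p ^ n)" by simp
  then show ?thesis by simp
qed

lemma lamN_dist:
  assumes cK: "\<forall>j<p ^ n. c j \<in> K" and j: "j < p ^ n" and k: "k < p ^ n"
    and nj: "c j * lamN j \<noteq> 0" and nk: "c k * lamN k \<noteq> 0"
    and eq: "v (c j * lamN j) = v (c k * lamN k)"
  shows "j = k"
proof -
  have cj: "c j \<noteq> 0" "c k \<noteq> 0" using nj nk by auto
  have e: "v (c j) + int j = v (c k) + int k"
    using eq cj cK j k by (simp add: lamN_def K_term_val)
  have "int p ^ n dvd v (c j)" "int p ^ n dvd v (c k)"
    using cj cK j k K_val_dvd by auto
  then have "int p ^ n dvd v (c k) - v (c j)" by (intro dvd_diff)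
  moreover have "int j - int k = v (c k) - v (c j)" using e by linarith
  ultimately have "int p ^ n dvd int j - int k" by simp
  then have "int j mod int p ^ n = int k mod int p ^ n" by (simp add: mod_eq_dvd_iff)
  moreover have "int j mod int p ^ n = int j"
    using int_lt_N[OF j] by (intro mod_pos_pos_trivial) simp_all
  moreover have "int k mod int p ^ n = int k"
    using int_lt_N[OF k] by (intro mod_pos_pos_trivial) simp_all
  ultimately show "j = k" by simp
qed

lemma expand:
  assumes x: "x \<in> P m"
  shows "\<exists>c. (\<forall>j<p ^ n. c j \<in> K) \<and> x = (\<Sum>j<p ^ n. c j * lamN j) \<and> (\<forall>j<p ^ n. c j * lamN j \<in> P m)"
proof -
  obtain c where c: "\<forall>j\<in>{..<p ^ n}. c j \<in> K" "x = (\<Sum>j\<in>{..<p ^ n}. c j * lamN j)"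
    using basis_exists[OF K_subfield kmod_L lamN_basis, of x] by blast
  have cK: "\<forall>j<p ^ n. c j \<in> K" using c(1) by simp
  have "\<forall>j<p ^ n. c j * lamN j \<in> P m"
  proof (intro allI impI)
    fix j assume j: "j < p ^ n"
    show "c j * lamN j \<in> P m"
    proof (rule distinct_val_sum'[OF val, where f="\<lambda>j. c j * lamN j" and I="{..<p ^ n}"])
      show "finite {..<p ^ n}" by simp
      show "(\<Sum>j\<in>{..<p ^ n}. c j * lamN j) \<in> P m" using x c(2) by simp
      show "j \<in> {..<p ^ n}" using j by simp
      fix i k assume "i \<in> {..<p ^ n}" "k \<in> {..<p ^ n}" "c i * lamN i \<noteq> 0" "c k * lamN k \<noteq> 0"
        "v (c i * lamN i) = v (c k * lamN k)"
      then show "i = k" using lamN_dist[OF cK] by simp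
    qed
  qed
  then show ?thesis using cK c(2) by blast
qed

lemma term_val:
  assumes "c \<in> K" "c \<noteq> 0"
  shows "c * lamN j \<noteq> 0 \<and> v (c * lamN j) = v c + int j"
  using assms lam_nz K_term_val by (simp add: lamN_def)

lemma lead:
  assumes x: "x \<noteq> 0"
  shows "\<exists>u. u \<in> val_units K v \<and> x - u * lam (v x) \<in> P (v x + 1)"
proof -
  have "x \<in> P (v x)" by (simp add: pow_ideal_def)
  from expand[OF this] obtain c where c: "\<forall>j<p ^ n. c j \<in> K" "x = (\<Sum>j<p ^ n. c j * lamN j)"
    "\<forall>j<p ^ n. c j * lamN j \<in> P (v x)" by blast
  have ex: "\<exists>j0<p ^ n. c j0 \<noteq> 0 \<and> v (c j0) + int j0 = v x"
  proof (rule ccontr)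
    assume nex: "\<not> ?thesis"
    have "\<forall>j<p ^ n. c j * lamN j \<in> P (v x + 1)"
    proof (intro allI impI)
      fix j assume j: "j < p ^ n"
      show "c j * lamN j \<in> P (v x + 1)"
      proof (cases "c j = 0")
        case True then show ?thesis by (simp add: pow_ideal_def)
      next
        case False
        then have tv: "c j * lamN j \<noteq> 0 \<and> v (c j * lamN j) = v (c j) + int j"
          using term_val c(1) j by blast
        then have "v (c j) + int j \<ge> v x" using c(3) j by (auto simp: pow_ideal_def)
        moreover have "v (c j) + int j \<noteq> v x" using nex j False by blast
        ultimately show ?thesis using tv by (simp add: pow_ideal_def)
      qed
    qed
    then have "x \<in> P (v x + 1)" unfolding c(2) by (intro pow_ideal_sum[OF val]) simp
    then show False using x by (simp add: pow_ideal_def)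
  qed
  then obtain j0 where j0: "j0 < p ^ n" "c j0 \<noteq> 0" "v (c j0) + int j0 = v x" by blast
  obtain u where u: "u \<in> val_units K v" "c j0 * lam (int j0) = u * lam (v (c j0) + int j0)"
    using lam_reduce[of "c j0" "int j0"] c(1) j0 by blast
  have "x = c j0 * lamN j0 + (\<Sum>j\<in>{..<p ^ n} - {j0}. c j * lamN j)"
    using c(2) j0(1) by (simp add: sum.remove)
  then have "x = u * lam (v x) + (\<Sum>j\<in>{..<p ^ n} - {j0}. c j * lamN j)"
    using u j0 by (simp add: lamN_def)
  then have "x - u * lam (v x) = (\<Sum>j\<in>{..<p ^ n} - {j0}. c j * lamN j)"
    by (simp add: diff_eq_eq add.commute)
  moreover have "(\<Sum>j\<in>{..<p ^ n} - {j0}. c j * lamN j) \<in> P (v x + 1)"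
  proof (intro pow_ideal_sum[OF val])
    fix j assume j: "j \<in> {..<p ^ n} - {j0}"
    show "c j * lamN j \<in> P (v x + 1)"
    proof (cases "c j = 0")
      case True then show ?thesis by (simp add: pow_ideal_def)
    next
      case False
      then have tv: "c j * lamN j \<noteq> 0 \<and> v (c j * lamN j) = v (c j) + int j"
        using term_val c(1) j by blast
      then have ge: "v (c j) + int j \<ge> v x" using c(3) j by (auto simp: pow_ideal_def)
      have tv0: "c j0 * lamN j0 \<noteq> 0 \<and> v (c j0 * lamN j0) = v (c j0) + int j0"
        using term_val c(1) j0 by blast
      have "v (c j) + int j \<noteq> v x"
      proof
        assume "v (c j) + int j = v x"
        then have "v (c j * lamN j) = v (c j0 * lamN j0)" using tv tv0 j0 by simp
        then have "j = j0" using lamN_dist[OF c(1)] j j0(1) tv tv0 by blast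
        then show False using j by simp
      qed
      then show ?thesis using tv ge by (simp add: pow_ideal_def)
    qed
  qed
  ultimately show ?thesis using u by auto
qed

definition shift_ok :: "'a \<Rightarrow> int \<Rightarrow> bool" where
  "shift_ok a \<sigma> \<longleftrightarrow> (\<forall>m x. x \<in> P m \<longrightarrow> act a x \<in> P (m + \<sigma>))"

lemma shift_okD: "shift_ok a \<sigma> \<Longrightarrow> x \<in> P m \<Longrightarrow> act a x \<in> P (m + \<sigma>)"
  by (simp add: shift_ok_def)

lemma shift_ok_lam:
  assumes H: "\<And>t. act a (lam t) \<in> P (t + \<sigma>)"
  shows "shift_ok a \<sigma>"
  unfolding shift_ok_def
proof (intro allI impI)
  fix m x assume x: "x \<in> P m"
  from expand[OF x] obtain c where c: "\<forall>j<p ^ n. c j \<in> K" "x = (\<Sum>j<p ^ n. c j * lamN j)"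
    "\<forall>j<p ^ n. c j * lamN j \<in> P m" by blast
  have "act a x = (\<Sum>j<p ^ n. act a (c j * lamN j))" unfolding c(2) by (rule act_sum2)
  also have "\<dots> \<in> P (m + \<sigma>)"
  proof (intro pow_ideal_sum[OF val])
    fix j assume j: "j \<in> {..<p ^ n}"
    show "act a (c j * lamN j) \<in> P (m + \<sigma>)"
    proof (cases "c j = 0")
      case True then show ?thesis by (simp add: act_zero2 pow_ideal_def)
    next
      case False
      obtain u where u: "u \<in> val_units K v" "c j * lam (int j) = u * lam (v (c j) + int j)"
        using lam_reduce[of "c j" "int j"] c(1) j False by auto
      have tv: "c j * lamN j \<noteq> 0 \<and> v (c j * lamN j) = v (c j) + int j"
        using term_val c(1) j False by blast
      then have ge: "v (c j) + int j \<ge> m" using c(3) j by (auto simp: pow_ideal_def)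
      have uK: "u \<in> K" using u(1) by (simp add: units_iff)
      have "act a (c j * lamN j) = u * act a (lam (v (c j) + int j))"
        using u(2) act_smul[OF uK] by (simp add: lamN_def)
      moreover have "u * act a (lam (v (c j) + int j)) \<in> P (0 + (v (c j) + int j + \<sigma>))"
        by (intro pow_ideal_mult[OF val] unit_P0 u(1) H)
      ultimately show ?thesis using ge pow_ideal_mono[OF val] by fastforce
    qed
  qed
  finally show "act a x \<in> P (m + \<sigma>)" .
qed

lemma shift_ok_mult: "shift_ok a \<sigma> \<Longrightarrow> shift_ok c \<tau> \<Longrightarrow> shift_ok (a * c) (\<sigma> + \<tau>)"
  unfolding shift_ok_def act_mult by (metis add.commute add.left_commute)

lemma shift_ok_one: "shift_ok 1 0"
  by (simp add: shift_ok_def act_one)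

lemma shift_ok_pow: "shift_ok a \<sigma> \<Longrightarrow> shift_ok (a ^ k) (int k * \<sigma>)"
proof (induction k)
  case 0 then show ?case using shift_ok_one by simp
next
  case (Suc k)
  then have "shift_ok (a * a ^ k) (\<sigma> + int k * \<sigma>)" by (intro shift_ok_mult) auto
  then show ?case by (simp add: algebra_simps)
qed

lemma Psi_lam_P:
  assumes i: "i \<in> {1..n}"
  shows "act (Psi i) (lam t) \<in> P (t + int p ^ (n - i) * b i)"
proof -
  let ?t' = "t + int p ^ (n - i) * b i"
  obtain u where u: "u \<in> val_units K v" and
    H: "if digit p (a_fun p n b t) (n - i) \<ge> 1
        then cong_tol v T ?t' (act (Psi i) (lam t)) (u * lam ?t')
        else cong_tol v T ?t' (act (Psi i) (lam t)) 0"
    using Psi_lam[OF i, of t] by blast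
  show ?thesis
  proof (cases "digit p (a_fun p n b t) (n - i) \<ge> 1")
    case True
    then have "cong_tol v T ?t' (act (Psi i) (lam t)) (u * lam ?t')" using H by simp
    then have "act (Psi i) (lam t) - u * lam ?t' \<in> P (?t' + 1)" by (rule cong_tolD)
    then have "act (Psi i) (lam t) - u * lam ?t' \<in> P ?t'" by (rule pow_ideal_mono[OF val]) simp
    moreover have "u * lam ?t' \<in> P ?t'" using unit_lam_P[OF u] .
    ultimately have "(act (Psi i) (lam t) - u * lam ?t') + u * lam ?t' \<in> P ?t'"
      by (rule pow_ideal_add[OF val])
    then show ?thesis by simp
  next
    case False
    then have "cong_tol v T ?t' (act (Psi i) (lam t)) 0" using H by simp
    then have "act (Psi i) (lam t) - 0 \<in> P (?t' + 1)" by (rule cong_tolD)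
    then have "act (Psi i) (lam t) - 0 \<in> P ?t'" by (rule pow_ideal_mono[OF val]) simp
    then show ?thesis by simp
  qed
qed

lemma Psi_shift: "i \<in> {1..n} \<Longrightarrow> shift_ok (Psi i) (int p ^ (n - i) * b i)"
  by (rule shift_ok_lam) (rule Psi_lam_P)

lemma Psi_pow_list_shift:
  "set js \<subseteq> {..<n} \<Longrightarrow> shift_ok (prod_list (map (\<lambda>j. Psi (n - j) ^ digit p s j) js))
      (sum_list (map (\<lambda>j. int (digit p s j) * int p ^ j * b (n - j)) js))"
proof (induction js)
  case Nil then show ?case using shift_ok_one by simp
next
  case (Cons j js)
  have j: "j < n" using Cons.prems by simp
  have i: "n - j \<in> {1..n}" using j by simp
  have nj: "n - (n - j) = j" using j by simp
  have "shift_ok (Psi (n - j) ^ digit p s j) (int (digit p s j) * (int p ^ (n - (n - j)) * b (n - j)))"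
    by (rule shift_ok_pow[OF Psi_shift[OF i]])
  then have "shift_ok (Psi (n - j) ^ digit p s j) (int (digit p s j) * int p ^ j * b (n - j))"
    using nj by (simp add: mult.assoc)
  moreover have "shift_ok (prod_list (map (\<lambda>j. Psi (n - j) ^ digit p s j) js))
      (sum_list (map (\<lambda>j. int (digit p s j) * int p ^ j * b (n - j)) js))"
    using Cons by simp
  ultimately have "shift_ok (Psi (n - j) ^ digit p s j * prod_list (map (\<lambda>j. Psi (n - j) ^ digit p s j) js))
      (int (digit p s j) * int p ^ j * b (n - j) + sum_list (map (\<lambda>j. int (digit p s j) * int p ^ j * b (n - j)) js))"
    by (rule shift_ok_mult)
  then show ?case by simp
qed

lemma Psi_pow_shift: "shift_ok (Psi_pow p n Psi s) (shift_b p n b s)"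
proof -
  have "shift_ok (Psi_pow p n Psi s) (sum_list (map (\<lambda>j. int (digit p s j) * int p ^ j * b (n - j)) [0..<n]))"
    unfolding Psi_pow_def by (rule Psi_pow_list_shift) auto
  moreover have "sum_list (map (\<lambda>j. int (digit p s j) * int p ^ j * b (n - j)) [0..<n])
      = shift_b p n b s"
    by (simp add: shift_b_reindex sum_set_upt_conv_sum_list_nat[symmetric] atLeast0LessThan)
  ultimately show ?thesis by simp
qed

end

context scaf begin

lemmas a_fun_dec' = a_fun_dec[OF prime_p bcop]
lemmas shift_b_inj' = shift_b_inj[OF prime_p bcop]
lemmas a_fun_top_exists' = a_fun_top_exists[OF prime_p bcop]

lemma units_mult: "u \<in> val_units K v \<Longrightarrow> w \<in> val_units K v \<Longrightarrow> u * w \<in> val_units K v"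
proof -
  assume u: "u \<in> val_units K v" and w: "w \<in> val_units K v"
  then have "u \<in> K" "w \<in> K" "u \<noteq> 0" "w \<noteq> 0" "v u = 0" "v w = 0" by (simp_all add: units_iff)
  moreover have "v (u * w) = v u + v w" using \<open>u \<noteq> 0\<close> \<open>w \<noteq> 0\<close> by (rule vv(1))
  ultimately show ?thesis using Kp(4) by (simp add: units_iff)
qed

lemma lead1:
  assumes i: "i \<in> {1..n}" and dg: "digit p (a_fun p n b t) (n - i) \<ge> 1"
    and u: "u \<in> val_units K v" and e: "e \<in> P (t + 1)"
  shows "\<exists>u' e'. u' \<in> val_units K v \<and> e' \<in> P (t + int p ^ (n - i) * b i + 1)
     \<and> act (Psi i) (u * lam t + e) = u' * lam (t + int p ^ (n - i) * b i) + e'"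
proof -
  let ?t' = "t + int p ^ (n - i) * b i"
  obtain u0 where u0: "u0 \<in> val_units K v" and
    H: "if digit p (a_fun p n b t) (n - i) \<ge> 1
        then cong_tol v T ?t' (act (Psi i) (lam t)) (u0 * lam ?t')
        else cong_tol v T ?t' (act (Psi i) (lam t)) 0"
    using Psi_lam[OF i, of t] by blast
  have "cong_tol v T ?t' (act (Psi i) (lam t)) (u0 * lam ?t')" using H dg by simp
  then have d: "act (Psi i) (lam t) - u0 * lam ?t' \<in> P (?t' + 1)" by (rule cong_tolD)
  define d where "d = act (Psi i) (lam t) - u0 * lam ?t'"
  have uK: "u \<in> K" using u by (simp add: units_iff)
  have "act (Psi i) (u * lam t + e) = u * act (Psi i) (lam t) + act (Psi i) e"
    by (simp add: act_add2 act_smul[OF uK])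
  also have "\<dots> = (u * u0) * lam ?t' + (u * d + act (Psi i) e)"
    by (simp add: d_def algebra_simps)
  finally have eq: "act (Psi i) (u * lam t + e) = (u * u0) * lam ?t' + (u * d + act (Psi i) e)" .
  have "u * d \<in> P (0 + (?t' + 1))" using unit_P0[OF u] d unfolding d_def by (rule pow_ideal_mult[OF val])
  moreover have "act (Psi i) e \<in> P (t + 1 + int p ^ (n - i) * b i)"
    by (rule shift_okD[OF Psi_shift[OF i] e])
  ultimately have "u * d + act (Psi i) e \<in> P (?t' + 1)"
    by (intro pow_ideal_add[OF val]) (simp_all add: algebra_simps)
  then show ?thesis using eq units_mult[OF u u0] by blast
qed

lemma lead_pow:
  assumes i: "i \<in> {1..n}"
  shows "k \<le> digit p (a_fun p n b t) (n - i) \<Longrightarrow> u \<in> val_units K v \<Longrightarrow> e \<in> P (t + 1) \<Longrightarrow>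
    \<exists>u' e'. u' \<in> val_units K v \<and> e' \<in> P (t + int k * (int p ^ (n - i) * b i) + 1)
     \<and> act (Psi i ^ k) (u * lam t + e) = u' * lam (t + int k * (int p ^ (n - i) * b i)) + e'
     \<and> (\<forall>j<n. digit p (a_fun p n b (t + int k * (int p ^ (n - i) * b i))) j
               = digit p (a_fun p n b t) j - (if j = n - i then k else 0))"
proof (induction k)
  case 0 then show ?case by (auto simp: act_one)
next
  case (Suc k)
  let ?sh = "int p ^ (n - i) * b i"
  let ?t1 = "t + int k * ?sh"
  from Suc obtain u1 e1 where u1: "u1 \<in> val_units K v" "e1 \<in> P (?t1 + 1)"
    "act (Psi i ^ k) (u * lam t + e) = u1 * lam ?t1 + e1"
    and dg1: "\<forall>j<n. digit p (a_fun p n b ?t1) j = digit p (a_fun p n b t) j - (if j = n - i then k else 0)"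
    by (metis Suc_leD)
  have ni: "n - i < n" using i by auto
  have "digit p (a_fun p n b ?t1) (n - i) \<ge> 1" using dg1 ni Suc.prems(1) by simp
  from lead1[OF i this u1(1,2)] obtain u2 e2 where u2: "u2 \<in> val_units K v"
    "e2 \<in> P (?t1 + ?sh + 1)" "act (Psi i) (u1 * lam ?t1 + e1) = u2 * lam (?t1 + ?sh) + e2" by blast
  have dec: "\<forall>j<n. digit p (a_fun p n b (?t1 + ?sh)) j = digit p (a_fun p n b ?t1) j - (if j = n - i then 1 else 0)"
    using a_fun_dec'[OF i \<open>digit p (a_fun p n b ?t1) (n - i) \<ge> 1\<close>] by simp
  have tt: "?t1 + ?sh = t + int (Suc k) * ?sh" by (simp add: algebra_simps)
  have "act (Psi i ^ Suc k) (u * lam t + e) = act (Psi i) (act (Psi i ^ k) (u * lam t + e))"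
    by (simp add: act_mult)
  also have "\<dots> = u2 * lam (?t1 + ?sh) + e2" using u1(3) u2(3) by simp
  finally have eq: "act (Psi i ^ Suc k) (u * lam t + e) = u2 * lam (t + int (Suc k) * ?sh) + e2"
    using tt by simp
  have dg2: "\<forall>j<n. digit p (a_fun p n b (t + int (Suc k) * ?sh)) j
       = digit p (a_fun p n b t) j - (if j = n - i then Suc k else 0)"
    using dec dg1 tt by auto
  show ?case using eq dg2 u2(1,2) tt by (intro exI[of _ u2] exI[of _ e2]) simp
qed

definition fP :: "nat \<Rightarrow> nat \<Rightarrow> 'a" where "fP s j = Psi (n - j) ^ digit p s j"
definition gP :: "nat \<Rightarrow> nat \<Rightarrow> int" where "gP s j = int (digit p s j) * int p ^ j * b (n - j)"

lemma lead_list: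
  "set js \<subseteq> {..<n} \<Longrightarrow> distinct js \<Longrightarrow> (\<forall>j\<in>set js. digit p s j \<le> digit p (a_fun p n b t) j) \<Longrightarrow>
    u \<in> val_units K v \<Longrightarrow> e \<in> P (t + 1) \<Longrightarrow>
    \<exists>u' e'. u' \<in> val_units K v \<and> e' \<in> P (t + sum_list (map (gP s) js) + 1)
     \<and> act (prod_list (map (fP s) js)) (u * lam t + e) = u' * lam (t + sum_list (map (gP s) js)) + e'
     \<and> (\<forall>j<n. digit p (a_fun p n b (t + sum_list (map (gP s) js))) j
               = digit p (a_fun p n b t) j - (if j \<in> set js then digit p s j else 0))"
proof (induction js)
  case Nil then show ?case by (auto simp: act_one)
next
  case (Cons j js)
  let ?G = "sum_list (map (gP s) js)"
  let ?t1 = "t + ?G"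
  from Cons obtain u1 e1 where u1: "u1 \<in> val_units K v" "e1 \<in> P (?t1 + 1)"
    "act (prod_list (map (fP s) js)) (u * lam t + e) = u1 * lam ?t1 + e1"
    and dg1: "\<forall>j<n. digit p (a_fun p n b ?t1) j = digit p (a_fun p n b t) j - (if j \<in> set js then digit p s j else 0)"
    by auto
  have j: "j < n" "j \<notin> set js" using Cons.prems by auto
  have i: "n - j \<in> {1..n}" using j by auto
  have nj: "n - (n - j) = j" using j by simp
  have "digit p s j \<le> digit p (a_fun p n b ?t1) (n - (n - j))"
    using dg1 j Cons.prems(3) nj by simp
  from lead_pow[OF i this u1(1,2)] obtain u2 e2 where u2: "u2 \<in> val_units K v"
    "e2 \<in> P (?t1 + int (digit p s j) * (int p ^ (n - (n - j)) * b (n - j)) + 1)"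
    "act (Psi (n - j) ^ digit p s j) (u1 * lam ?t1 + e1) = u2 * lam (?t1 + int (digit p s j) * (int p ^ (n - (n - j)) * b (n - j))) + e2"
    and dg2: "\<forall>j'<n. digit p (a_fun p n b (?t1 + int (digit p s j) * (int p ^ (n - (n - j)) * b (n - j)))) j'
               = digit p (a_fun p n b ?t1) j' - (if j' = n - (n - j) then digit p s j else 0)"
    by blast
  have tt: "?t1 + int (digit p s j) * (int p ^ (n - (n - j)) * b (n - j)) = t + sum_list (map (gP s) (j # js))"
    using nj by (simp add: gP_def algebra_simps)
  have "act (prod_list (map (fP s) (j # js))) (u * lam t + e)
      = act (Psi (n - j) ^ digit p s j) (act (prod_list (map (fP s) js)) (u * lam t + e))"
    by (simp add: fP_def act_mult)
  also have "\<dots> = u2 * lam (t + sum_list (map (gP s) (j # js))) + e2"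
    using u1(3) u2(3) tt by simp
  finally have eq: "act (prod_list (map (fP s) (j # js))) (u * lam t + e) = u2 * lam (t + sum_list (map (gP s) (j # js))) + e2" .
  have tt2: "t + sum_list (map (gP s) (j # js)) = ?t1 + gP s j" by (simp add: algebra_simps)
  have gj: "int (digit p s j) * (int p ^ j * b (n - j)) = gP s j"
    by (simp add: gP_def mult.assoc)
  have dg2': "\<forall>j'<n. digit p (a_fun p n b (?t1 + gP s j)) j'
               = digit p (a_fun p n b ?t1) j' - (if j' = j then digit p s j else 0)"
    using dg2 unfolding nj gj .
  have dg3: "\<forall>j'<n. digit p (a_fun p n b (t + sum_list (map (gP s) (j # js)))) j'
       = digit p (a_fun p n b t) j' - (if j' \<in> set (j # js) then digit p s j' else 0)"
  proof (intro allI impI)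
    fix j' assume j': "j' < n"
    have "digit p (a_fun p n b (t + sum_list (map (gP s) (j # js)))) j'
        = digit p (a_fun p n b ?t1) j' - (if j' = j then digit p s j else 0)"
      unfolding tt2 using dg2' j' by blast
    also have "\<dots> = digit p (a_fun p n b t) j' - (if j' \<in> set (j # js) then digit p s j' else 0)"
      using dg1 j' j(2) by auto
    finally show "digit p (a_fun p n b (t + sum_list (map (gP s) (j # js)))) j'
       = digit p (a_fun p n b t) j' - (if j' \<in> set (j # js) then digit p s j' else 0)" .
  qed
  have "e2 \<in> P (t + sum_list (map (gP s) (j # js)) + 1)" using u2(2) tt by simp
  then show ?case using eq dg3 u2(1) by blast
qed

lemma Psi_pow_list: "Psi_pow p n Psi s = prod_list (map (fP s) [0..<n])"
  unfolding Psi_pow_def fP_def by simp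

lemma gP_sum: "sum_list (map (gP s) [0..<n]) = shift_b p n b s"
  by (simp add: gP_def shift_b_reindex sum_set_upt_conv_sum_list_nat[symmetric] atLeast0LessThan)

lemma Y_val:
  assumes top: "a_fun p n b t0 = p ^ n - 1" and x: "x \<noteq> 0" "v x = t0" and s: "s < p ^ n"
  shows "act (Psi_pow p n Psi s) x \<noteq> 0 \<and> v (act (Psi_pow p n Psi s) x) = t0 + shift_b p n b s"
proof -
  obtain u where u: "u \<in> val_units K v" "x - u * lam (v x) \<in> P (v x + 1)" using lead[OF x(1)] by blast
  define e where "e = x - u * lam t0"
  have xe: "x = u * lam t0 + e" by (simp add: e_def)
  have e: "e \<in> P (t0 + 1)" using u(2) x(2) by (simp add: e_def)
  have dg: "\<forall>j\<in>set [0..<n]. digit p s j \<le> digit p (a_fun p n b t0) j"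
    using top digit_top[OF p_gt1] digit_lt p_gt1 by (auto simp: less_Suc_eq_le[symmetric])
  have s1: "set [0..<n] \<subseteq> {..<n}" by auto
  from lead_list[OF s1 distinct_upt dg u(1) e] obtain u' e' where
    r: "u' \<in> val_units K v" "e' \<in> P (t0 + shift_b p n b s + 1)"
      "act (Psi_pow p n Psi s) x = u' * lam (t0 + shift_b p n b s) + e'"
    by (auto simp: gP_sum Psi_pow_list xe)
  have w: "u' * lam (t0 + shift_b p n b s) \<noteq> 0 \<and> v (u' * lam (t0 + shift_b p n b s)) = t0 + shift_b p n b s"
    by (rule unit_lam_v[OF r(1)])
  then have "e' \<in> P (v (u' * lam (t0 + shift_b p n b s)) + 1)" using r(2) by simp
  from v_add_lt[OF val _ this] w r(3) show ?thesis by simp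
qed

lemma Y_dist:
  assumes top: "a_fun p n b t0 = p ^ n - 1" and x: "x \<noteq> 0" "v x = t0"
    and cK: "\<forall>s<p ^ n. c s \<in> K" and s: "s < p ^ n" and s': "s' < p ^ n"
    and n1: "c s * act (Psi_pow p n Psi s) x \<noteq> 0" and n2: "c s' * act (Psi_pow p n Psi s') x \<noteq> 0"
    and eq: "v (c s * act (Psi_pow p n Psi s) x) = v (c s' * act (Psi_pow p n Psi s') x)"
  shows "s = s'"
proof -
  have c0: "c s \<noteq> 0" "c s' \<noteq> 0" using n1 n2 by auto
  have Y1: "act (Psi_pow p n Psi s) x \<noteq> 0 \<and> v (act (Psi_pow p n Psi s) x) = t0 + shift_b p n b s"
    using Y_val[OF top x s] .
  have Y2: "act (Psi_pow p n Psi s') x \<noteq> 0 \<and> v (act (Psi_pow p n Psi s') x) = t0 + shift_b p n b s'"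
    using Y_val[OF top x s'] .
  have "v (c s) + (t0 + shift_b p n b s) = v (c s') + (t0 + shift_b p n b s')"
    using eq vv(1)[OF c0(1), of "act (Psi_pow p n Psi s) x"] vv(1)[OF c0(2), of "act (Psi_pow p n Psi s') x"] Y1 Y2
    by simp
  then have e: "shift_b p n b s - shift_b p n b s' = v (c s') - v (c s)" by linarith
  have "int p ^ n dvd v (c s')" "int p ^ n dvd v (c s)" using cK s s' c0 K_val_dvd by auto
  then have "int p ^ n dvd shift_b p n b s - shift_b p n b s'" unfolding e by (rule dvd_diff)
  then have "shift_b p n b s mod int p ^ n = shift_b p n b s' mod int p ^ n" by (simp add: mod_eq_dvd_iff)
  then show "s = s'" using shift_b_inj'[OF s s'] by simp
qed

lemma Y_indep:
  assumes top: "a_fun p n b t0 = p ^ n - 1" and x: "x \<noteq> 0" "v x = t0"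
  shows "indep K (*) (\<lambda>s. act (Psi_pow p n Psi s) x) {..<p ^ n}"
  unfolding indep_def
proof (intro allI impI ballI)
  fix c s assume cK: "\<forall>s\<in>{..<p ^ n}. c s \<in> K" and z: "(\<Sum>s\<in>{..<p ^ n}. c s * act (Psi_pow p n Psi s) x) = 0"
    and s: "s \<in> {..<p ^ n}"
  have "c s * act (Psi_pow p n Psi s) x = 0"
  proof (rule distinct_val_sum_zero[OF val, where f="\<lambda>s. c s * act (Psi_pow p n Psi s) x" and I="{..<p ^ n}"])
    show "finite {..<p ^ n}" by simp
    show "(\<Sum>s\<in>{..<p ^ n}. c s * act (Psi_pow p n Psi s) x) = 0" by (rule z)
    show "s \<in> {..<p ^ n}" by (rule s)
    fix i j assume "i \<in> {..<p ^ n}" "j \<in> {..<p ^ n}" "c i * act (Psi_pow p n Psi i) x \<noteq> 0"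
      "c j * act (Psi_pow p n Psi j) x \<noteq> 0" "v (c i * act (Psi_pow p n Psi i) x) = v (c j * act (Psi_pow p n Psi j) x)"
    then show "i = j" using Y_dist[OF top x, of c i j] cK by auto
  qed
  moreover have "act (Psi_pow p n Psi s) x \<noteq> 0" using Y_val[OF top x, of s] s by simp
  ultimately show "c s = 0" by simp
qed

end

context scaf begin

abbreviation smA where "smA \<equiv> (\<lambda>k a. \<iota> k * a)"

lemma act_combo: "(\<forall>s\<in>I. c s \<in> K) \<Longrightarrow> act (\<Sum>s\<in>I. \<iota> (c s) * Q s) x = (\<Sum>s\<in>I. c s * act (Q s) x)"
  by (simp add: act_sum1 act_iota_mult)

lemma Psi_indep_gen:
  assumes top: "a_fun p n b t0 = p ^ n - 1" and x: "x \<noteq> 0" "v x = t0"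
  shows "indep K smA (Psi_pow p n Psi) {..<p ^ n}"
  unfolding indep_def
proof (intro allI impI ballI)
  fix c s assume cK: "\<forall>s\<in>{..<p ^ n}. c s \<in> K" and z: "(\<Sum>s\<in>{..<p ^ n}. \<iota> (c s) * Psi_pow p n Psi s) = 0"
    and s: "s \<in> {..<p ^ n}"
  have "(\<Sum>s\<in>{..<p ^ n}. c s * act (Psi_pow p n Psi s) x) = act (\<Sum>s\<in>{..<p ^ n}. \<iota> (c s) * Psi_pow p n Psi s) x"
    using act_combo[OF cK] by simp
  also have "\<dots> = 0" using z act_zero1 by simp
  finally show "c s = 0" using Y_indep[OF top x, unfolded indep_def, rule_format, of c] cK s by simp
qed

lemma top_lam: "\<exists>t0. a_fun p n b t0 = p ^ n - 1 \<and> lam t0 \<noteq> 0 \<and> v (lam t0) = t0"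
  using a_fun_top_exists'[of 0] lam_nz v_lam by blast

lemma Psi_basis: "basis_over K smA (Psi_pow p n Psi) {..<p ^ n}"
proof -
  obtain t0 where t0: "a_fun p n b t0 = p ^ n - 1" "lam t0 \<noteq> 0" "v (lam t0) = t0" using top_lam by blast
  obtain e where e: "basis_over K smA e {..<p ^ n}" using A_dim by blast
  show ?thesis by (rule indep_basis[OF K_subfield kmod_A e Psi_indep_gen[OF t0]])
qed

lemma part2:
  assumes top: "a_fun p n b b' = p ^ n - 1" and rho: "\<rho> \<noteq> 0" "v \<rho> = b'"
  shows "\<forall>x. \<exists>!\<alpha>. act \<alpha> \<rho> = x"
proof
  fix x
  obtain e where e: "basis_over K (*) e {..<p ^ n}" using degree by blast
  have Yb: "basis_over K (*) (\<lambda>s. act (Psi_pow p n Psi s) \<rho>) {..<p ^ n}"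
    by (rule indep_basis[OF K_subfield kmod_L e Y_indep[OF top rho]])
  obtain c where c: "\<forall>s\<in>{..<p ^ n}. c s \<in> K" "x = (\<Sum>s\<in>{..<p ^ n}. c s * act (Psi_pow p n Psi s) \<rho>)"
    using basis_exists[OF K_subfield kmod_L Yb, of x] by blast
  define \<alpha> where "\<alpha> = (\<Sum>s\<in>{..<p ^ n}. \<iota> (c s) * Psi_pow p n Psi s)"
  have ex: "act \<alpha> \<rho> = x" unfolding \<alpha>_def using act_combo[OF c(1)] c(2) by simp
  show "\<exists>!\<alpha>. act \<alpha> \<rho> = x"
  proof (rule ex1I[of _ \<alpha>])
    show "act \<alpha> \<rho> = x" by (rule ex)
  next
    fix \<beta> assume \<beta>: "act \<beta> \<rho> = x"
    obtain d1 where d1: "\<forall>s\<in>{..<p ^ n}. d1 s \<in> K" "\<alpha> = (\<Sum>s\<in>{..<p ^ n}. \<iota> (d1 s) * Psi_pow p n Psi s)"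
      using basis_exists[OF K_subfield kmod_A Psi_basis, of \<alpha>] by blast
    obtain d2 where d2: "\<forall>s\<in>{..<p ^ n}. d2 s \<in> K" "\<beta> = (\<Sum>s\<in>{..<p ^ n}. \<iota> (d2 s) * Psi_pow p n Psi s)"
      using basis_exists[OF K_subfield kmod_A Psi_basis, of \<beta>] by blast
    have "(\<Sum>s\<in>{..<p ^ n}. d2 s * act (Psi_pow p n Psi s) \<rho>) = (\<Sum>s\<in>{..<p ^ n}. d1 s * act (Psi_pow p n Psi s) \<rho>)"
      using act_combo[OF d1(1), of "Psi_pow p n Psi" \<rho>] act_combo[OF d2(1), of "Psi_pow p n Psi" \<rho>]
        d1(2) d2(2) ex \<beta> by simp
    then have "(\<Sum>s\<in>{..<p ^ n}. (d2 s - d1 s) * act (Psi_pow p n Psi s) \<rho>) = 0"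
      by (simp add: left_diff_distrib sum_subtractf)
    moreover have "\<forall>s\<in>{..<p ^ n}. d2 s - d1 s \<in> K" using d1 d2 subfield_diff[OF K_subfield] by blast
    ultimately have "\<forall>s\<in>{..<p ^ n}. d2 s - d1 s = 0"
      using Y_indep[OF top rho, unfolded indep_def, rule_format, of "\<lambda>s. d2 s - d1 s"] by simp
    then have "\<forall>s\<in>{..<p ^ n}. d2 s = d1 s" by simp
    then show "\<beta> = \<alpha>" using d1(2) d2(2) by simp
  qed
qed


definition co :: "'a \<Rightarrow> nat \<Rightarrow> 'l" where
  "co \<alpha> = (SOME c. (\<forall>s\<in>{..<p ^ n}. c s \<in> K) \<and> (\<forall>s. s \<notin> {..<p ^ n} \<longrightarrow> c s = 0)
      \<and> \<alpha> = (\<Sum>s\<in>{..<p ^ n}. \<iota> (c s) * Psi_pow p n Psi s))"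

lemma co_spec: "(\<forall>s\<in>{..<p ^ n}. co \<alpha> s \<in> K) \<and> (\<forall>s. s \<notin> {..<p ^ n} \<longrightarrow> co \<alpha> s = 0)
      \<and> \<alpha> = (\<Sum>s\<in>{..<p ^ n}. \<iota> (co \<alpha> s) * Psi_pow p n Psi s)"
proof -
  have "\<exists>c. (\<forall>s\<in>{..<p ^ n}. c s \<in> K) \<and> (\<forall>s. s \<notin> {..<p ^ n} \<longrightarrow> c s = 0)
      \<and> \<alpha> = (\<Sum>s\<in>{..<p ^ n}. \<iota> (c s) * Psi_pow p n Psi s)"
    using basis_exists[OF K_subfield kmod_A Psi_basis] by blast
  then show ?thesis unfolding co_def by (rule someI_ex)
qed

lemma co_unique:
  assumes "\<forall>s\<in>{..<p ^ n}. c s \<in> K" "\<forall>s. s \<notin> {..<p ^ n} \<longrightarrow> c s = 0"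
    "\<alpha> = (\<Sum>s\<in>{..<p ^ n}. \<iota> (c s) * Psi_pow p n Psi s)"
  shows "co \<alpha> = c"
proof -
  have "(\<Sum>s\<in>{..<p ^ n}. \<iota> (co \<alpha> s) * Psi_pow p n Psi s) = (\<Sum>s\<in>{..<p ^ n}. \<iota> (c s) * Psi_pow p n Psi s)"
    using co_spec[of \<alpha>] assms(3) by simp
  then show ?thesis using co_spec[of \<alpha>] assms
    by (intro basis_unique[OF K_subfield kmod_A Psi_basis]) auto
qed

lemma co_K: "co \<alpha> s \<in> K"
  using co_spec[of \<alpha>] Kp(1) by (cases "s < p ^ n") auto

lemma co_add: "co (\<alpha> + \<beta>) = (\<lambda>s. co \<alpha> s + co \<beta> s)"
proof (rule co_unique)
  show "\<forall>s\<in>{..<p ^ n}. co \<alpha> s + co \<beta> s \<in> K" using co_K Kp(3) by blast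
  show "\<forall>s. s \<notin> {..<p ^ n} \<longrightarrow> co \<alpha> s + co \<beta> s = 0" using co_spec by simp
  have "\<alpha> + \<beta> = (\<Sum>s\<in>{..<p ^ n}. \<iota> (co \<alpha> s) * Psi_pow p n Psi s) + (\<Sum>s\<in>{..<p ^ n}. \<iota> (co \<beta> s) * Psi_pow p n Psi s)"
    using co_spec[of \<alpha>] co_spec[of \<beta>] by simp
  also have "\<dots> = (\<Sum>s\<in>{..<p ^ n}. \<iota> (co \<alpha> s + co \<beta> s) * Psi_pow p n Psi s)"
    by (simp add: sum.distrib[symmetric] iota_add co_K distrib_right)
  finally show "\<alpha> + \<beta> = (\<Sum>s\<in>{..<p ^ n}. \<iota> (co \<alpha> s + co \<beta> s) * Psi_pow p n Psi s)" .
qed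

lemma co_smul: "k \<in> K \<Longrightarrow> co (\<iota> k * \<alpha>) = (\<lambda>s. k * co \<alpha> s)"
proof (rule co_unique)
  assume k: "k \<in> K"
  show "\<forall>s\<in>{..<p ^ n}. k * co \<alpha> s \<in> K" using co_K Kp(4) k by blast
  show "\<forall>s. s \<notin> {..<p ^ n} \<longrightarrow> k * co \<alpha> s = 0" using co_spec by simp
  have "\<iota> k * \<alpha> = \<iota> k * (\<Sum>s\<in>{..<p ^ n}. \<iota> (co \<alpha> s) * Psi_pow p n Psi s)"
    using co_spec[of \<alpha>] by simp
  also have "\<dots> = (\<Sum>s\<in>{..<p ^ n}. \<iota> (k * co \<alpha> s) * Psi_pow p n Psi s)"
    by (simp add: sum_distrib_left iota_mult[OF k co_K] mult.assoc)
  finally show "\<iota> k * \<alpha> = (\<Sum>s\<in>{..<p ^ n}. \<iota> (k * co \<alpha> s) * Psi_pow p n Psi s)" .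
qed

lemma co_zero: "(\<forall>s<p ^ n. co \<alpha> s = 0) \<Longrightarrow> \<alpha> = 0"
proof -
  assume z: "\<forall>s<p ^ n. co \<alpha> s = 0"
  have "\<alpha> = (\<Sum>s\<in>{..<p ^ n}. \<iota> (co \<alpha> s) * Psi_pow p n Psi s)" using co_spec by blast
  also have "\<dots> = 0" using z iota_zero by simp
  finally show ?thesis .
qed

lemma co_0: "co 0 s = 0"
proof -
  have "co 0 = (\<lambda>s. 0)"
    by (rule co_unique) (use Kp(1) iota_zero in auto)
  then show ?thesis by simp
qed

context
  fixes h :: int
begin

definition R where "R = assoc_order act v h"

lemma R_iff: "\<alpha> \<in> R \<longleftrightarrow> (\<forall>x\<in>P h. act \<alpha> x \<in> P h)"
  by (simp add: R_def assoc_order_def)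

lemma R_0: "0 \<in> R" by (simp add: R_iff act_zero1 pow_ideal_def)
lemma R_1: "1 \<in> R" by (simp add: R_iff act_one)
lemma R_add: "\<alpha> \<in> R \<Longrightarrow> \<beta> \<in> R \<Longrightarrow> \<alpha> + \<beta> \<in> R"
  by (simp add: R_iff act_add1 pow_ideal_add[OF val])
lemma R_mult: "\<alpha> \<in> R \<Longrightarrow> \<beta> \<in> R \<Longrightarrow> \<alpha> * \<beta> \<in> R"
  by (simp add: R_iff act_mult)
lemma R_neg: "\<alpha> \<in> R \<Longrightarrow> - \<alpha> \<in> R"
  by (simp add: R_iff act_neg1 pow_ideal_uminus[OF val])
lemma R_smul: "c \<in> val_ring K v \<Longrightarrow> \<alpha> \<in> R \<Longrightarrow> \<iota> c * \<alpha> \<in> R"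
proof -
  assume c: "c \<in> val_ring K v" and a: "\<alpha> \<in> R"
  have cK: "c \<in> K" "c \<in> P 0" using c by (simp_all add: val_ring_iff)
  show ?thesis unfolding R_iff
  proof
    fix x assume x: "x \<in> P h"
    have "c * act \<alpha> x \<in> P (0 + h)" using cK(2) a x unfolding R_iff by (intro pow_ideal_mult[OF val]) auto
    then show "act (\<iota> c * \<alpha>) x \<in> P h" using act_iota_mult[OF cK(1)] by simp
  qed
qed

lemma R_sum: "(\<forall>f\<in>F. c f \<in> val_ring K v) \<Longrightarrow> F \<subseteq> R \<Longrightarrow> (\<Sum>f\<in>F. \<iota> (c f) * f) \<in> R"
proof (induction F rule: infinite_finite_induct)
  case (infinite F) then show ?case using R_0 by simp
next
  case empty then show ?case using R_0 by simp
next
  case (insert x F) then show ?case using R_add R_smul by simp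
qed

lemma h_top: "\<exists>h'. h' \<ge> h \<and> a_fun p n b h' = p ^ n - 1"
  by (rule a_fun_top_exists')

definition h' where "h' = (SOME h'. h' \<ge> h \<and> a_fun p n b h' = p ^ n - 1)"

lemma h'_prop: "h' \<ge> h" "a_fun p n b h' = p ^ n - 1"
  using someI_ex[OF h_top] by (simp_all add: h'_def)

lemma co_bound:
  assumes a: "\<alpha> \<in> R" and s: "s < p ^ n" and nz: "co \<alpha> s \<noteq> 0"
  shows "v (co \<alpha> s) \<ge> h - h' - shift_b p n b s"
proof -
  let ?x = "lam h'"
  have x: "?x \<noteq> 0" "v ?x = h'" using lam_nz v_lam by auto
  have xP: "?x \<in> P h" using x h'_prop(1) by (simp add: pow_ideal_def)
  have cK: "\<forall>s\<in>{..<p ^ n}. co \<alpha> s \<in> K" using co_K by blast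
  have "act \<alpha> ?x = act (\<Sum>s\<in>{..<p ^ n}. \<iota> (co \<alpha> s) * Psi_pow p n Psi s) ?x"
    using co_spec[of \<alpha>] by simp
  also have "\<dots> = (\<Sum>s\<in>{..<p ^ n}. co \<alpha> s * act (Psi_pow p n Psi s) ?x)" by (rule act_combo[OF cK])
  finally have sm: "(\<Sum>s\<in>{..<p ^ n}. co \<alpha> s * act (Psi_pow p n Psi s) ?x) \<in> P h"
    using a xP unfolding R_iff by metis
  have tm: "co \<alpha> s * act (Psi_pow p n Psi s) ?x \<in> P h"
  proof (rule distinct_val_sum'[OF val, where f="\<lambda>s. co \<alpha> s * act (Psi_pow p n Psi s) ?x" and I="{..<p ^ n}"])
    show "finite {..<p ^ n}" by simp
    show "(\<Sum>s\<in>{..<p ^ n}. co \<alpha> s * act (Psi_pow p n Psi s) ?x) \<in> P h" by (rule sm)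
    show "s \<in> {..<p ^ n}" using s by simp
    fix i j assume "i \<in> {..<p ^ n}" "j \<in> {..<p ^ n}" "co \<alpha> i * act (Psi_pow p n Psi i) ?x \<noteq> 0"
      "co \<alpha> j * act (Psi_pow p n Psi j) ?x \<noteq> 0"
      "v (co \<alpha> i * act (Psi_pow p n Psi i) ?x) = v (co \<alpha> j * act (Psi_pow p n Psi j) ?x)"
    then show "i = j" using Y_dist[OF h'_prop(2) x, of "co \<alpha>" i j] co_K by auto
  qed
  have Y: "act (Psi_pow p n Psi s) ?x \<noteq> 0 \<and> v (act (Psi_pow p n Psi s) ?x) = h' + shift_b p n b s"
    using Y_val[OF h'_prop(2) x s] .
  have "v (co \<alpha> s * act (Psi_pow p n Psi s) ?x) = v (co \<alpha> s) + (h' + shift_b p n b s)"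
    using vv(1)[OF nz, of "act (Psi_pow p n Psi s) ?x"] Y by simp
  moreover have "co \<alpha> s * act (Psi_pow p n Psi s) ?x \<noteq> 0" using nz Y by simp
  ultimately show ?thesis using tm by (simp add: pow_ideal_def)
qed

definition Mj where "Mj j = {\<alpha> \<in> R. \<forall>s<j. co \<alpha> s = 0}"

definition spanO where "spanO F = {\<Sum>f\<in>F. \<iota> (c f) * f | c. \<forall>f\<in>F. c f \<in> val_ring K v}"

lemma Mj_add: "\<alpha> \<in> Mj j \<Longrightarrow> \<beta> \<in> Mj j \<Longrightarrow> \<alpha> + \<beta> \<in> Mj j"
  by (simp add: Mj_def R_add co_add)

lemma Mj_smul: "c \<in> val_ring K v \<Longrightarrow> \<alpha> \<in> Mj j \<Longrightarrow> \<iota> c * \<alpha> \<in> Mj j"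
  using co_smul[of c \<alpha>] R_smul[of c \<alpha>] by (simp add: Mj_def val_ring_iff)

lemma Mj_0: "0 \<in> Mj j" by (simp add: Mj_def R_0 co_0)

lemma Mj_sum: "(\<forall>f\<in>F. c f \<in> val_ring K v) \<Longrightarrow> F \<subseteq> Mj j \<Longrightarrow> (\<Sum>f\<in>F. \<iota> (c f) * f) \<in> Mj j"
proof (induction F rule: infinite_finite_induct)
  case (infinite F) then show ?case using Mj_0 by simp
next
  case empty then show ?case using Mj_0 by simp
next
  case (insert x F) then show ?case using Mj_add Mj_smul by simp
qed

lemma span_sub: "F \<subseteq> Mj j \<Longrightarrow> spanO F \<subseteq> Mj j"
  unfolding spanO_def using Mj_sum by blast

lemma Mj_top: "Mj (p ^ n) = {0}"
proof
  show "Mj (p ^ n) \<subseteq> {0}" using co_zero by (auto simp: Mj_def)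
  show "{0} \<subseteq> Mj (p ^ n)" using Mj_0 by simp
qed

lemma Mj_bot: "Mj 0 = R" by (simp add: Mj_def)

lemma echelon_step:
  assumes j: "j < p ^ n" and F': "finite F'" "F' \<subseteq> Mj (Suc j)" "Mj (Suc j) = spanO F'"
  shows "\<exists>F. finite F \<and> F \<subseteq> Mj j \<and> Mj j = spanO F"
proof (cases "\<exists>\<alpha>\<in>Mj j. co \<alpha> j \<noteq> 0")
  case False
  have "Mj j = Mj (Suc j)"
  proof
    show "Mj j \<subseteq> Mj (Suc j)" using False by (auto simp: Mj_def less_Suc_eq)
    show "Mj (Suc j) \<subseteq> Mj j" by (auto simp: Mj_def)
  qed
  then show ?thesis using F' by auto
next
  case True
  then obtain \<alpha>0 where a0: "\<alpha>0 \<in> Mj j" "co \<alpha>0 j \<noteq> 0" by blast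
  define L where "L = h - h' - shift_b p n b j"
  obtain g where g: "g \<in> Mj j \<and> co g j \<noteq> 0"
    and gmin: "\<forall>\<alpha>. \<alpha> \<in> Mj j \<and> co \<alpha> j \<noteq> 0 \<longrightarrow> nat (v (co g j) - L) \<le> nat (v (co \<alpha> j) - L)"
    using ex_has_least_nat[of "\<lambda>\<alpha>. \<alpha> \<in> Mj j \<and> co \<alpha> j \<noteq> 0" \<alpha>0 "\<lambda>\<alpha>. nat (v (co \<alpha> j) - L)"] a0 by blast
  have bnd: "\<alpha> \<in> Mj j \<Longrightarrow> co \<alpha> j \<noteq> 0 \<Longrightarrow> v (co \<alpha> j) \<ge> L" for \<alpha>
    using co_bound[of \<alpha> j] j by (simp add: Mj_def L_def)
  have gmin': "\<alpha> \<in> Mj j \<Longrightarrow> co \<alpha> j \<noteq> 0 \<Longrightarrow> v (co g j) \<le> v (co \<alpha> j)" for \<alpha>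
    using gmin bnd[of \<alpha>] bnd[of g] g by force
  have gF': "g \<notin> F'" using F'(2) g by (auto simp: Mj_def)
  define F where "F = insert g F'"
  have finF: "finite F" using F' by (simp add: F_def)
  have subF: "F \<subseteq> Mj j" using F'(2) g by (auto simp: F_def Mj_def)
  have "Mj j \<subseteq> spanO F"
  proof
    fix \<alpha> assume a: "\<alpha> \<in> Mj j"
    define r where "r = co \<alpha> j / co g j"
    have gK: "co g j \<in> K" by (rule co_K)
    have rK: "r \<in> K" unfolding r_def by (rule subfield_divide[OF K_subfield co_K gK])
    have rP: "r \<in> P 0"
    proof (cases "co \<alpha> j = 0")
      case True then show ?thesis by (simp add: r_def pow_ideal_def)
    next
      case False
      have ig: "inverse (co g j) \<noteq> 0" using g by simp
      have "v r = v (co \<alpha> j) + v (inverse (co g j))"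
        unfolding r_def divide_inverse by (rule vv(1)[OF False ig])
      also have "\<dots> = v (co \<alpha> j) - v (co g j)" using vv(5)[of "co g j"] g by simp
      finally show ?thesis using gmin'[OF a False] by (simp add: pow_ideal_def)
    qed
    have rO: "r \<in> val_ring K v" using rK rP by (simp add: val_ring_iff)
    have mrO: "- r \<in> val_ring K v" using rK rP Kp(5) pow_ideal_uminus[OF val] by (simp add: val_ring_iff)
    define \<beta> where "\<beta> = \<alpha> + \<iota> (- r) * g"
    have bR: "\<beta> \<in> R" unfolding \<beta>_def using a g R_add R_smul[OF mrO] by (simp add: Mj_def)
    have cob: "co \<beta> = (\<lambda>s. co \<alpha> s + (- r) * co g s)"
      unfolding \<beta>_def co_add co_smul[OF Kp(5)[OF rK]] by simp
    have "\<beta> \<in> Mj (Suc j)"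
    proof -
      have "\<forall>s<Suc j. co \<beta> s = 0"
      proof (intro allI impI)
        fix s assume "s < Suc j"
        then consider "s < j" | "s = j" by linarith
        then show "co \<beta> s = 0"
        proof cases
          case 1 then show ?thesis using a g by (simp add: cob Mj_def)
        next
          case 2 then show ?thesis using g by (simp add: cob r_def)
        qed
      qed
      then show ?thesis using bR by (simp add: Mj_def)
    qed
    then have "\<beta> \<in> spanO F'" using F'(3) by simp
    then obtain c where c: "\<forall>f\<in>F'. c f \<in> val_ring K v" "\<beta> = (\<Sum>f\<in>F'. \<iota> (c f) * f)"
      unfolding spanO_def by blast
    define c' where "c' = c(g := r)"
    have "\<alpha> = \<beta> + \<iota> r * g" unfolding \<beta>_def using iota_neg[OF rK] by simp
    also have "\<dots> = \<iota> (c' g) * g + (\<Sum>f\<in>F'. \<iota> (c' f) * f)"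
    proof -
      have "(\<Sum>f\<in>F'. \<iota> (c' f) * f) = (\<Sum>f\<in>F'. \<iota> (c f) * f)"
        using gF' by (intro sum.cong refl) (auto simp: c'_def)
      then show ?thesis using c(2) by (simp add: c'_def add.commute)
    qed
    also have "\<dots> = (\<Sum>f\<in>F. \<iota> (c' f) * f)" using F'(1) gF' by (simp add: F_def)
    finally have "\<alpha> = (\<Sum>f\<in>F. \<iota> (c' f) * f)" .
    moreover have "\<forall>f\<in>F. c' f \<in> val_ring K v" using c(1) rO by (auto simp: F_def c'_def)
    ultimately show "\<alpha> \<in> spanO F" unfolding spanO_def by blast
  qed
  moreover have "spanO F \<subseteq> Mj j" by (rule span_sub[OF subF])
  ultimately show ?thesis using finF subF by blast
qed

lemma echelon: "k \<le> p ^ n \<Longrightarrow> \<exists>F. finite F \<and> F \<subseteq> Mj (p ^ n - k) \<and> Mj (p ^ n - k) = spanO F"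
proof (induction k)
  case 0
  have "spanO {} = {0}" by (simp add: spanO_def)
  then show ?case using Mj_top by auto
next
  case (Suc k)
  then obtain F' where F': "finite F'" "F' \<subseteq> Mj (p ^ n - k)" "Mj (p ^ n - k) = spanO F'" by auto
  have eq: "Suc (p ^ n - Suc k) = p ^ n - k" using Suc.prems by simp
  have "p ^ n - Suc k < p ^ n" using Suc.prems by simp
  from echelon_step[OF this] F' eq show ?case by simp
qed

lemma R_fg: "\<exists>F. finite F \<and> F \<subseteq> R \<and> R = {\<Sum>f\<in>F. \<iota> (c f) * f | c. \<forall>f\<in>F. c f \<in> val_ring K v}"
  using echelon[of "p ^ n"] Mj_bot by (simp add: spanO_def)

definition piS where "piS s = (SOME k. k \<in> K \<and> k \<noteq> 0 \<and> v k = int p ^ n * \<bar>shift_b p n b s\<bar>)"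

lemma piS: "piS s \<in> K" "piS s \<noteq> 0" "v (piS s) = int p ^ n * \<bar>shift_b p n b s\<bar>"
proof -
  have "\<exists>k. k \<in> K \<and> k \<noteq> 0 \<and> v k = int p ^ n * \<bar>shift_b p n b s\<bar>"
    using K_val_exists by blast
  from someI_ex[OF this] show "piS s \<in> K" "piS s \<noteq> 0" "v (piS s) = int p ^ n * \<bar>shift_b p n b s\<bar>"
    by (simp_all add: piS_def)
qed

definition eR where "eR s = \<iota> (piS s) * Psi_pow p n Psi s"

lemma eR_in: "eR s \<in> R"
  unfolding R_iff
proof
  fix x assume x: "x \<in> P h"
  let ?B = "shift_b p n b s"
  have "act (Psi_pow p n Psi s) x \<in> P (h + ?B)" by (rule shift_okD[OF Psi_pow_shift x])
  moreover have "piS s \<in> P (int p ^ n * \<bar>?B\<bar>)" using piS by (simp add: pow_ideal_def)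
  ultimately have "piS s * act (Psi_pow p n Psi s) x \<in> P (int p ^ n * \<bar>?B\<bar> + (h + ?B))"
    by (intro pow_ideal_mult[OF val])
  moreover have "int p ^ n * \<bar>?B\<bar> + (h + ?B) \<ge> h"
  proof -
    have "int p ^ n \<ge> 1" using N_pos by linarith
    then have "int p ^ n * \<bar>?B\<bar> \<ge> 1 * \<bar>?B\<bar>" by (intro mult_right_mono) simp_all
    then show ?thesis by simp
  qed
  ultimately have "piS s * act (Psi_pow p n Psi s) x \<in> P h" using pow_ideal_mono[OF val] by blast
  then show "act (eR s) x \<in> P h" unfolding eR_def using act_iota_mult[OF piS(1)] by simp
qed

lemma eR_indep: "indep K smA eR {..<p ^ n}"
  unfolding indep_def
proof (intro allI impI ballI)
  fix c s assume cK: "\<forall>s\<in>{..<p ^ n}. c s \<in> K" and z: "(\<Sum>s\<in>{..<p ^ n}. \<iota> (c s) * eR s) = 0"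
    and s: "s \<in> {..<p ^ n}"
  have cK': "\<forall>s\<in>{..<p ^ n}. c s * piS s \<in> K" using cK piS(1) Kp(4) by blast
  have "(\<Sum>s\<in>{..<p ^ n}. \<iota> (c s * piS s) * Psi_pow p n Psi s) = (\<Sum>s\<in>{..<p ^ n}. \<iota> (c s) * eR s)"
    using cK by (intro sum.cong refl) (simp add: eR_def iota_mult[OF _ piS(1)] mult.assoc)
  also have "\<dots> = 0" by (rule z)
  finally have "c s * piS s = 0"
    using basis_indep[OF K_subfield kmod_A Psi_basis, unfolded indep_def, rule_format, of "\<lambda>s. c s * piS s"] cK' s
    by simp
  then show "c s = 0" using piS(2) by simp
qed

lemma R_basis: "\<exists>(e::nat \<Rightarrow> 'a) I. basis_over K (\<lambda>k a. \<iota> k * a) e I \<and> e ` I \<subseteq> R"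
proof -
  obtain e where e: "basis_over K smA e {..<p ^ n}" using A_dim by blast
  have b1: "basis_over K smA eR {..<p ^ n}" by (rule indep_basis[OF K_subfield kmod_A e eR_indep])
  have b2: "eR ` {..<p ^ n} \<subseteq> R" using eR_in by blast
  show ?thesis by (rule exI[of _ eR], rule exI[of _ "{..<p ^ n}"], rule conjI[OF b1 b2])
qed

lemma part3: "is_OK_order K v \<iota> (assoc_order act v h)"
  unfolding is_OK_order_def R_def[symmetric]
proof (intro conjI)
  show "0 \<in> R" by (rule R_0)
  show "1 \<in> R" by (rule R_1)
  show "\<forall>a\<in>R. \<forall>b\<in>R. a + b \<in> R \<and> a * b \<in> R" using R_add R_mult by blast
  show "\<forall>a\<in>R. - a \<in> R" using R_neg by blast
  show "\<forall>c\<in>val_ring K v. \<forall>a\<in>R. \<iota> c * a \<in> R" using R_smul by blast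
  show "\<exists>F. finite F \<and> F \<subseteq> R \<and> R = {\<Sum>f\<in>F. \<iota> (c f) * f | c. \<forall>f\<in>F. c f \<in> val_ring K v}"
    by (rule R_fg)
  show "\<exists>(e::nat \<Rightarrow> 'a) I. basis_over K (\<lambda>k a. \<iota> k * a) e I \<and> e ` I \<subseteq> R" by (rule R_basis)
qed

end

end

theorem proposition2p9:
  fixes K :: "'l::field set" and v :: "'l \<Rightarrow> int"
    and \<iota> :: "'l \<Rightarrow> 'a::ring_1" and act :: "'a \<Rightarrow> 'l \<Rightarrow> 'l"
    and p n :: nat and b :: "nat \<Rightarrow> int" and T :: enat
    and lam :: "int \<Rightarrow> 'l" and Psi :: "nat \<Rightarrow> 'a"
    and b' :: int and \<rho> :: 'l
  assumes prime_p: "prime p"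
    and K_subfield: "subfield_of K"
    and val: "normalized_discrete_valuation v"
    and K_complete: "complete_wrt K v"
    and residue_char: "of_nat p \<in> pow_ideal v 1"
    and degree: "\<exists>e::nat \<Rightarrow> 'l. basis_over K (*) e {..<p ^ n}"
    and totally_ramified: "{v x | x. x \<in> K \<and> x \<noteq> 0} = {int p ^ n * z | z. True}"
    and A_alg: "K_algebra K \<iota>"
    and A_dim: "\<exists>e::nat \<Rightarrow> 'a. basis_over K (\<lambda>k a. \<iota> k * a) e {..<p ^ n}"
    and action: "alg_action K \<iota> act"
    and scaffold: "is_scaffold K v act p n b T lam Psi"
    and b'_def: "a_fun p n b b' = p ^ n - 1"
    and rho: "\<rho> \<noteq> 0" "v \<rho> = b'"
  shows "basis_over K (\<lambda>k a. \<iota> k * a) (Psi_pow p n Psi) {..<p ^ n}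
       \<and> (\<forall>x. \<exists>!\<alpha>. act \<alpha> \<rho> = x)
       \<and> (\<forall>h. is_OK_order K v \<iota> (assoc_order act v h))"
  proof -
  interpret S: scaf K v \<iota> act p n b T lam Psi
    by (rule scaf.intro[OF prime_p K_subfield val degree totally_ramified A_alg A_dim action scaffold])
  have p1: "basis_over K (\<lambda>k a. \<iota> k * a) (Psi_pow p n Psi) {..<p ^ n}" by (rule S.Psi_basis)
  have p2: "\<forall>x. \<exists>!\<alpha>. act \<alpha> \<rho> = x" by (rule S.part2[OF b'_def rho])
  have p3: "\<forall>h. is_OK_order K v \<iota> (assoc_order act v h)" using S.part3 by blast
  show ?thesis using p1 p2 p3 by blast
qed

end
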